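(* Let $\mathcal{A}$ be a weakly irreducible $Z$-tensor of order $m$ and dimension $n$, written $\mathcal{A}=s\mathcal{I}-\mathcal{B}$ with $s>0$ and $\mathcal{B}$ nonnegative. Then: (1) $\mathbb{PV}_{\lambda_{\min}(\mathcal{A})}(\mathcal{A})$ is finite, i.e. $\mathcal{A}$ has finitely many eigenvectors (up to scalar) associated with $\lambda_{\min}(\mathcal{A})$; (2) $\mathbb{PV}_{\lambda_{\min}(\mathcal{A})}(\mathcal{A})$, with the quasi-Hadamard product $\circ$ described below, is an abelian group isomorphic to $\mathfrak{D}^{(0)}(\mathcal{A})$; (3) $s(\mathcal{A})=|\mathbb{PV}_{\lambda_{\min}(\mathcal{A})}(\mathcal{A})|$.
   Context: A real tensor $\mathcal{A}=(a_{i_1\cdots i_m})$ of order $m$ and dimension $n$ has real entries indexed by $[n]^m$. For $x\in\mathbb{C}^n$, $(\mathcal{A}x^{m-1})_i=\sum_{i_2,\dots,i_m}a_{ii_2\cdots i_m}x_{i_2}\cdots x_{i_m}$; $\mathcal{I}$ is the identity tensor. $\lambda$ is an eigenvalue with eigenvector $x\neq 0$ if $\mathcal{A}x^{m-1}=\lambda x^{[m-1]}$, $x^{[m-1]}=(x_i^{m-1})_i$. An H-eigenvalue is an eigenvalue with a real eigenvector; $\lambda_{\min}(\mathcal{A})$ denotes the least H-eigenvalue and $\rho(\cdot)$ the spectral radius. $\mathbb{PV}_\lambda(\mathcal{A})=\{x\in\mathbb{P}^{n-1}:\mathcal{A}x^{m-1}=\lambda x^{[m-1]}\}$. A $Z$-tensor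 is a real tensor with all off-diagonal entries nonpositive, i.e. $\mathcal{A}=s\mathcal{I}-\mathcal{B}$ with $s>0$, $\mathcal{B}\ge 0$. $\mathcal{A}$ is weakly irreducible if the directed graph on $[n]$ having an arc $i\to j$ ($j\ne i$) whenever $a_{ii_2\cdots i_m}\neq 0$ for some $(i_2,\dots,i_m)$ with $j\in\{i_2,\dots,i_m\}$ is strongly connected. For an invertible diagonal $D=\mathrm{diag}(d_1,\dots,d_n)$, $D^{-(m-1)}\mathcal{A}D$ has entries $d_{i_1}^{-(m-1)}a_{i_1\cdots i_m}d_{i_2}\cdots d_{i_m}$; $\mathfrak{D}^{(0)}(\mathcal{A})=\{D:\mathcal{A}=D^{-(m-1)}\mathcal{A}D,\ d_1=1\}$ (a group under matrix multiplication) and $s(\mathcal{A})=|\mathfrak{D}^{(0)}(\mathcal{A})|$ is the stabilizing index. Group structure: $\mathbb{PV}_{\lambda_{\min}(\mathcal{A})}(\mathcal{A})=\mathbb{PV}_{\rho(\mathcal{B})}(\mathcal{B})$, and since $\mathcal{B}$ is nonnegative weakly irreducible, it has a positive (Perron) eigenvector $v_p$ for $\rho(\mathcal{B})$, normalized with first entry $1$, and every $y$ in this eigenvariety may be represented with $y_1=1$, in which case $|y|=v_p$. Put $D_y=\mathrm{diag}(y_1/|y_1|,\dots,y_n/|y_n|)$ and $y\circ\hat y:=D_yD_{\hat y}v_p$. *)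

theory Defs
  imports "HOL-Algebra.Algebra" "HOL-Analysis.Analysis"
begin

text \<open>Conventions: indices are 0-based, the index set [n] is {0..<n}.
 A tensor of order m and dimension n is a function on index lists; only
 lists of length m with entries < n are meaningful. Vectors in C^n are
 functions nat \<Rightarrow> complex vanishing outside {0..<n}.\<close>

definition idx_lists :: "nat \<Rightarrow> nat \<Rightarrow> nat list set" where
  "idx_lists k n = {is. length is = k \<and> set is \<subseteq> {0..<n}}"

definition vecs :: "nat \<Rightarrow> (nat \<Rightarrow> 'a::zero) set" where
  "vecs n = {x. \<forall>i\<ge>n. x i = 0}"

definition tapp :: "nat \<Rightarrow> nat \<Rightarrow> (nat list \<Rightarrow> 'a::comm_semiring_1) \<Rightarrow> (nat \<Rightarrow> 'a) \<Rightarrow> nat \<Rightarrow> 'a" where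
  "tapp m n A x i = (\<Sum>is\<in>idx_lists (m - 1) n. A (i # is) * prod_list (map x is))"

definition ident_tensor :: "nat list \<Rightarrow> real" where
  "ident_tensor is = (if (\<forall>j\<in>set is. j = hd is) then 1 else 0)"

definition is_eigpair :: "nat \<Rightarrow> nat \<Rightarrow> (nat list \<Rightarrow> real) \<Rightarrow> complex \<Rightarrow> (nat \<Rightarrow> complex) \<Rightarrow> bool" where
  "is_eigpair m n A lam x \<longleftrightarrow> x \<in> vecs n \<and> (\<exists>i<n. x i \<noteq> 0) \<and>
     (\<forall>i<n. tapp m n (\<lambda>is. complex_of_real (A is)) x i = lam * x i ^ (m - 1))"

definition eigenvalue :: "nat \<Rightarrow> nat \<Rightarrow> (nat list \<Rightarrow> real) \<Rightarrow> complex \<Rightarrow> bool" where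
  "eigenvalue m n A lam \<longleftrightarrow> (\<exists>x. is_eigpair m n A lam x)"

definition H_eigenvalue :: "nat \<Rightarrow> nat \<Rightarrow> (nat list \<Rightarrow> real) \<Rightarrow> real \<Rightarrow> bool" where
  "H_eigenvalue m n A lam \<longleftrightarrow> (\<exists>x::nat \<Rightarrow> real. x \<in> vecs n \<and> (\<exists>i<n. x i \<noteq> 0) \<and>
     (\<forall>i<n. tapp m n A x i = lam * x i ^ (m - 1)))"

definition lambda_min :: "nat \<Rightarrow> nat \<Rightarrow> (nat list \<Rightarrow> real) \<Rightarrow> real" where
  "lambda_min m n A = (LEAST lam. H_eigenvalue m n A lam)"

definition spectral_radius :: "nat \<Rightarrow> nat \<Rightarrow> (nat list \<Rightarrow> real) \<Rightarrow> real" where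
  "spectral_radius m n A = Sup {cmod lam | lam. eigenvalue m n A lam}"

text \<open>points of complex projective space P^{n-1}: classes of nonzero vectors\<close>
definition pclass :: "(nat \<Rightarrow> complex) \<Rightarrow> (nat \<Rightarrow> complex) set" where
  "pclass x = {(\<lambda>i. c * x i) | c. c \<noteq> 0}"

definition PV :: "nat \<Rightarrow> nat \<Rightarrow> (nat list \<Rightarrow> real) \<Rightarrow> complex \<Rightarrow> (nat \<Rightarrow> complex) set set" where
  "PV m n A lam = {pclass x | x. is_eigpair m n A lam x}"

definition weakly_irreducible :: "nat \<Rightarrow> nat \<Rightarrow> (nat list \<Rightarrow> real) \<Rightarrow> bool" where
  "weakly_irreducible m n A \<longleftrightarrow>
    (let E = {(i, j). i < n \<and> j < n \<and> j \<noteq> i \<and>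
               (\<exists>is\<in>idx_lists (m - 1) n. A (i # is) \<noteq> 0 \<and> j \<in> set is)}
     in \<forall>i<n. \<forall>j<n. (i, j) \<in> E\<^sup>*)"

definition perron_vec :: "nat \<Rightarrow> nat \<Rightarrow> (nat list \<Rightarrow> real) \<Rightarrow> nat \<Rightarrow> real" where
  "perron_vec m n B = (SOME v. v \<in> vecs n \<and> (\<forall>i<n. v i > 0) \<and> v 0 = 1 \<and>
      (\<forall>i<n. tapp m n B v i = spectral_radius m n B * v i ^ (m - 1)))"

definition prep :: "(nat \<Rightarrow> complex) set \<Rightarrow> nat \<Rightarrow> complex" where
  "prep P = (SOME y. y \<in> P \<and> y 0 = 1)"

text \<open>quasi-Hadamard product y o y' = D_y D_y' v_p (sgn z = z / |z|)\<close>
definition qhprod :: "nat \<Rightarrow> (nat \<Rightarrow> real) \<Rightarrow> (nat \<Rightarrow> complex) set \<Rightarrow> (nat \<Rightarrow> complex) set \<Rightarrow> (nat \<Rightarrow> complex) set" where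
  "qhprod n v P Q = pclass (\<lambda>i. if i < n then sgn (prep P i) * sgn (prep Q i) * complex_of_real (v i) else 0)"

definition PV_group :: "nat \<Rightarrow> nat \<Rightarrow> (nat list \<Rightarrow> real) \<Rightarrow> (nat list \<Rightarrow> real) \<Rightarrow> (nat \<Rightarrow> complex) set monoid" where
  "PV_group m n A B = \<lparr> carrier = PV m n A (complex_of_real (lambda_min m n A)),
     monoid.mult = qhprod n (perron_vec m n B),
     one = pclass (\<lambda>i. complex_of_real (perron_vec m n B i)) \<rparr>"

text \<open>D^(0)(A): invertible complex diagonal matrices D = diag(d) with d_1 = 1 and
  A = D^{-(m-1)} A D; entries outside [n] fixed to 1.\<close>
definition D0 :: "nat \<Rightarrow> nat \<Rightarrow> (nat list \<Rightarrow> real) \<Rightarrow> (nat \<Rightarrow> complex) set" where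
  "D0 m n A = {d. (\<forall>i<n. d i \<noteq> 0) \<and> (\<forall>i\<ge>n. d i = 1) \<and> d 0 = 1 \<and>
     (\<forall>is\<in>idx_lists m n. complex_of_real (A is) =
        inverse (d (hd is) ^ (m - 1)) * complex_of_real (A is) * prod_list (map d (tl is)))}"

definition D0_group :: "nat \<Rightarrow> nat \<Rightarrow> (nat list \<Rightarrow> real) \<Rightarrow> (nat \<Rightarrow> complex) monoid" where
  "D0_group m n A = \<lparr> carrier = D0 m n A, monoid.mult = (\<lambda>d e i. d i * e i), one = (\<lambda>_. 1) \<rparr>"

definition stabilizing_index :: "nat \<Rightarrow> nat \<Rightarrow> (nat list \<Rightarrow> real) \<Rightarrow> nat" where
  "stabilizing_index m n A = card (D0 m n A)"

end

theory Submission
  imports Defs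
begin

lemma prod_list_scale:
  fixes c :: "'a::comm_semiring_1"
  shows "prod_list (map (\<lambda>i. c * x i) xs) = c ^ length xs * prod_list (map x xs)"
  by (induction xs) (auto simp: algebra_simps)

lemma prod_list_nonneg_real:
  fixes f :: "nat \<Rightarrow> real"
  assumes "\<forall>k\<in>set xs. 0 \<le> f k"
  shows "0 \<le> prod_list (map f xs)"
  using assms by (induction xs) auto

lemma prod_list_mono_nonneg:
  fixes f g :: "nat \<Rightarrow> real"
  assumes "\<forall>k\<in>set xs. 0 \<le> f k \<and> f k \<le> g k"
  shows "prod_list (map f xs) \<le> prod_list (map g xs)"
  using assms
proof (induction xs)
  case Nil then show ?case by simp
next
  case (Cons a xs)
  have "0 \<le> prod_list (map f xs)" using Cons.prems by (intro prod_list_nonneg_real) auto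
  then show ?case using Cons by (auto intro!: mult_mono)
qed

lemma prod_list_pos_real:
  fixes f :: "nat \<Rightarrow> real"
  assumes "\<forall>k\<in>set xs. 0 < f k"
  shows "0 < prod_list (map f xs)"
  using assms by (induction xs) auto

lemma prod_list_strict:
  fixes f g :: "nat \<Rightarrow> real"
  assumes "\<forall>k\<in>set xs. 0 < f k \<and> f k \<le> g k" "k0 \<in> set xs" "f k0 < g k0"
  shows "prod_list (map f xs) < prod_list (map g xs)"
  using assms
proof (induction xs)
  case Nil then show ?case by simp
next
  case (Cons a xs)
  have fp: "0 < prod_list (map f xs)" using Cons.prems by (auto intro: prod_list_pos_real)
  have le: "prod_list (map f xs) \<le> prod_list (map g xs)"
    using Cons.prems by (intro prod_list_mono_nonneg) (auto simp: less_imp_le)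
  show ?case
  proof (cases "k0 = a")
    case True
    have "f a * prod_list (map f xs) < g a * prod_list (map f xs)"
      using fp True Cons.prems by simp
    also have "\<dots> \<le> g a * prod_list (map g xs)"
      using le Cons.prems by (auto intro: mult_left_mono)
    finally show ?thesis by simp
  next
    case False
    then have "prod_list (map f xs) < prod_list (map g xs)" using Cons by auto
    moreover have "0 < f a" "f a \<le> g a" using Cons.prems by auto
    ultimately have "f a * prod_list (map f xs) < g a * prod_list (map g xs)"
      using fp by (intro mult_le_less_imp_less) auto
    then show ?thesis by simp
  qed
qed

lemma prod_list_eq_imp_eq:
  fixes f g :: "nat \<Rightarrow> real"
  assumes "\<forall>k\<in>set xs. 0 \<le> f k \<and> f k \<le> g k \<and> 0 < g k"
    and "prod_list (map f xs) = prod_list (map g xs)" and "k0 \<in> set xs"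
  shows "f k0 = g k0"
proof (rule ccontr)
  assume "f k0 \<noteq> g k0"
  then have lt: "f k0 < g k0" using assms by auto
  show False
  proof (cases "\<forall>k\<in>set xs. 0 < f k")
    case True
    then have "prod_list (map f xs) < prod_list (map g xs)"
      using assms lt by (intro prod_list_strict[of xs f g k0]) auto
    then show False using assms by simp
  next
    case False
    then obtain k where "k \<in> set xs" "f k = 0" using assms by force
    then have "prod_list (map f xs) = 0" by (simp add: prod_list_zero_iff)
    moreover have "0 < prod_list (map g xs)" using assms by (auto intro: prod_list_pos_real)
    ultimately show False using assms by simp
  qed
qed

lemma prod_list_lower:
  fixes f :: "nat \<Rightarrow> real"
  assumes "\<forall>k\<in>set xs. a \<le> f k" "0 < a" "k0 \<in> set xs"
  shows "f k0 * a ^ (length xs - 1) \<le> prod_list (map f xs)"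
  using assms
proof (induction xs)
  case Nil then show ?case by simp
next
  case (Cons b xs)
  have fpos: "\<forall>k\<in>set (b#xs). 0 < f k" using Cons.prems by force
  have pl: "a ^ length xs \<le> prod_list (map f xs)"
  proof -
    have "a ^ length xs = prod_list (map (\<lambda>_. a) xs)" by (induction xs) auto
    also have "\<dots> \<le> prod_list (map f xs)" using Cons.prems by (intro prod_list_mono_nonneg) auto
    finally show ?thesis .
  qed
  show ?case
  proof (cases "k0 = b")
    case True
    then show ?thesis using pl fpos by (auto intro: mult_left_mono)
  next
    case False
    then have k0: "k0 \<in> set xs" using Cons.prems by auto
    then have ne: "xs \<noteq> []" by auto
    have ih: "f k0 * a ^ (length xs - 1) \<le> prod_list (map f xs)" using Cons k0 by auto
    have "f k0 * a ^ (length (b#xs) - 1) = a * (f k0 * a ^ (length xs - 1))"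
      using ne by (cases xs) (auto simp: algebra_simps)
    also have "\<dots> \<le> f b * prod_list (map f xs)"
      using ih Cons.prems fpos by (intro mult_mono) (auto simp: less_imp_le)
    finally show ?thesis by simp
  qed
qed

lemma sum_list_eq_max:
  fixes f :: "nat \<Rightarrow> real"
  assumes "\<forall>k\<in>set xs. f k \<le> c" "sum_list (map f xs) = real (length xs) * c" "k0 \<in> set xs"
  shows "f k0 = c"
  using assms
proof (induction xs)
  case Nil then show ?case by simp
next
  case (Cons b xs)
  have s1: "sum_list (map f xs) \<le> real (length xs) * c"
  proof -
    have "sum_list (map f xs) \<le> sum_list (map (\<lambda>_. c) xs)"
      using Cons.prems by (intro sum_list_mono) auto
    also have "\<dots> = real (length xs) * c" by (induction xs) (auto simp: algebra_simps)
    finally show ?thesis .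
  qed
  have fb: "f b = c" using Cons.prems s1 by (auto simp: algebra_simps)
  then have "sum_list (map f xs) = real (length xs) * c" using Cons.prems by (auto simp: algebra_simps)
  then show ?case using Cons fb by auto
qed

lemma cmod_prod_list: "cmod (prod_list (map y xs)) = prod_list (map (\<lambda>k. cmod (y k)) xs)"
  apply (induction xs) apply simp apply (simp add: norm_mult) done

lemma sgn_prod_list: "sgn (prod_list (map (y::nat\<Rightarrow>complex) xs)) = prod_list (map (\<lambda>k. sgn (y k)) xs)"
  apply (induction xs) apply simp apply (simp add: sgn_mult) done

lemma of_real_prod_list: "complex_of_real (prod_list (map y xs)) = prod_list (map (\<lambda>k. complex_of_real (y k)) xs)"
  apply (induction xs) apply simp apply simp done

lemma cnj_sgn_mult: assumes "(Z::complex) \<noteq> 0" shows "cnj (sgn Z) * Z = complex_of_real (cmod Z)"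
proof -
  have "sgn Z = complex_of_real (1 / cmod Z) * Z" by (simp add: sgn_div_norm scaleR_conv_of_real divide_inverse_commute)
  hence "cnj (sgn Z) * Z = complex_of_real (1/cmod Z) * (cnj Z * Z)" by (simp add: mult.assoc)
  also have "cnj Z * Z = complex_of_real ((cmod Z)^2)" using complex_norm_square[of Z] by (simp add: mult.commute)
  also have "complex_of_real (1/cmod Z) * complex_of_real ((cmod Z)^2) = complex_of_real (cmod Z)"
  proof -
    have "1/cmod Z * (cmod Z)^2 = cmod Z" using assms by (simp add: power2_eq_square)
    then show ?thesis by (metis of_real_mult)
  qed
  finally show ?thesis .
qed

lemma unit_cnj_cancel: assumes "cmod (u::complex) = 1" shows "u * (cnj u * z) = z"
proof -
  have "u * cnj u = complex_of_real ((cmod u)^2)" using complex_norm_square[of u] by simp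
  then have "u * cnj u = 1" using assms by simp
  then show ?thesis by (simp add: mult.assoc[symmetric])
qed
lemma triangle_eq_phase:
  fixes z :: "'i \<Rightarrow> complex"
  assumes "finite I" "cmod (sum z I) = (\<Sum>k\<in>I. cmod (z k))" "k \<in> I"
  shows "z k = complex_of_real (cmod (z k)) * sgn (sum z I)"
proof (cases "sum z I = 0")
  case True
  then have "(\<Sum>k\<in>I. cmod (z k)) = 0" using assms by simp
  then have "cmod (z k) = 0" using assms sum_nonneg_eq_0_iff[of I "\<lambda>k. cmod (z k)"] by auto
  then show ?thesis by simp
next
  case False
  define Z where "Z = sum z I"
  define u where "u = sgn Z"
  have nu: "cmod u = 1" using False by (simp add: u_def Z_def norm_sgn)
  have Re_le: "\<And>k. Re (cnj u * z k) \<le> cmod (z k)"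
  proof -
    fix k
    have "Re (cnj u * z k) \<le> cmod (cnj u * z k)" by (rule complex_Re_le_cmod)
    also have "\<dots> = cmod (z k)" using nu by (simp add: norm_mult)
    finally show "Re (cnj u * z k) \<le> cmod (z k)" .
  qed
  have "(\<Sum>k\<in>I. Re (cnj u * z k)) = Re (cnj u * Z)"
    by (simp add: Z_def sum_distrib_left)
  also have "cnj u * Z = complex_of_real (cmod Z)"
    using False unfolding u_def Z_def by (rule cnj_sgn_mult)
  finally have "(\<Sum>k\<in>I. Re (cnj u * z k)) = (\<Sum>k\<in>I. cmod (z k))" using assms by (simp add: Z_def)
  then have eqk: "Re (cnj u * z k) = cmod (z k)"
    using sum_mono_inv[of "\<lambda>k. Re (cnj u * z k)" I "\<lambda>k. cmod (z k)" k] Re_le assms by blast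
  define w where "w = cnj u * z k"
  have cw: "cmod w = cmod (z k)" using nu by (simp add: w_def norm_mult)
  have "Im w = 0"
  proof -
    have "(cmod w)^2 = (Re w)^2 + (Im w)^2" by (simp add: cmod_power2)
    then show ?thesis using eqk cw w_def by simp
  qed
  then have "w = complex_of_real (cmod (z k))" using eqk by (simp add: complex_eq_iff w_def)
  then have "u * w = u * complex_of_real (cmod (z k))" by simp
  moreover have "u * w = z k" using nu unfolding w_def by (rule unit_cnj_cancel)
  ultimately have "z k = u * complex_of_real (cmod (z k))" by simp
  then show ?thesis unfolding u_def Z_def by (simp only: mult.commute)
qed


lemma finite_idx: "finite (idx_lists k n)"
proof -
  have "idx_lists k n = {xs. set xs \<subseteq> {0..<n} \<and> length xs = k}"
    unfolding idx_lists_def by auto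
  then show ?thesis using finite_lists_length_eq[of "{0..<n}" k] by simp
qed

lemma idx_cons: "i < n \<Longrightarrow> is \<in> idx_lists k n \<Longrightarrow> i # is \<in> idx_lists (Suc k) n"
  unfolding idx_lists_def by auto

lemma idx_set: "is \<in> idx_lists k n \<Longrightarrow> j \<in> set is \<Longrightarrow> j < n"
  unfolding idx_lists_def by auto

lemma idx_len: "is \<in> idx_lists k n \<Longrightarrow> length is = k"
  unfolding idx_lists_def by auto

lemma tapp_cong:
  assumes "\<forall>i<n. x i = y i"
  shows "tapp m n A x j = tapp m n A y j"
  unfolding tapp_def
proof (rule sum.cong[OF refl])
  fix "is" assume "is \<in> idx_lists (m - 1) n"
  then have "map x is = map y is" using assms by (auto dest: idx_set)
  then show "A (j # is) * prod_list (map x is) = A (j # is) * prod_list (map y is)" by (simp only:)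
qed

lemma tapp_scale:
  "tapp m n A (\<lambda>i. c * x i) j = c ^ (m - 1) * tapp m n A x j"
  unfolding tapp_def sum_distrib_left
proof (rule sum.cong[OF refl])
  fix "is" assume "is \<in> idx_lists (m - 1) n"
  then have "length is = m - 1" by (rule idx_len)
  then show "A (j # is) * prod_list (map (\<lambda>i. c * x i) is) = c ^ (m - 1) * (A (j # is) * prod_list (map x is))"
    by (simp add: prod_list_scale algebra_simps)
qed

lemma tapp_of_real:
  "tapp m n (\<lambda>is. complex_of_real (A is)) (\<lambda>i. complex_of_real (x i)) j = complex_of_real (tapp m n A x j)"
  unfolding tapp_def by (simp add: of_real_prod_list[symmetric] del: of_real_prod_list)

lemma tapp_mono:
  fixes A :: "nat list \<Rightarrow> real"
  assumes "\<forall>is\<in>idx_lists (m - 1) n. 0 \<le> A (j # is)" "\<forall>i<n. 0 \<le> x i \<and> x i \<le> y i"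
  shows "tapp m n A x j \<le> tapp m n A y j"
  unfolding tapp_def
proof (rule sum_mono)
  fix "is" assume is_in: "is \<in> idx_lists (m - 1) n"
  have "prod_list (map x is) \<le> prod_list (map y is)"
    using assms(2) idx_set[OF is_in] by (intro prod_list_mono_nonneg) auto
  then show "A (j # is) * prod_list (map x is) \<le> A (j # is) * prod_list (map y is)"
    using assms(1) is_in by (intro mult_left_mono) auto
qed

lemma tapp_nonneg:
  fixes A :: "nat list \<Rightarrow> real"
  assumes "\<forall>is\<in>idx_lists (m - 1) n. 0 \<le> A (j # is)" "\<forall>i<n. 0 \<le> x i"
  shows "0 \<le> tapp m n A x j"
  unfolding tapp_def
proof (rule sum_nonneg)
  fix "is" assume is_in: "is \<in> idx_lists (m - 1) n"
  have "0 \<le> prod_list (map x is)"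
    using assms(2) idx_set[OF is_in] by (intro prod_list_nonneg_real) auto
  then show "0 \<le> A (j # is) * prod_list (map x is)"
    using assms(1) is_in by auto
qed

lemma cmod_tapp_le:
  fixes A :: "nat list \<Rightarrow> real"
  assumes "\<forall>is\<in>idx_lists (m - 1) n. 0 \<le> A (j # is)"
  shows "cmod (tapp m n (\<lambda>is. complex_of_real (A is)) y j) \<le> tapp m n A (\<lambda>i. cmod (y i)) j"
  unfolding tapp_def
proof -
  have "cmod (\<Sum>is\<in>idx_lists (m - 1) n. complex_of_real (A (j # is)) * prod_list (map y is))
      \<le> (\<Sum>is\<in>idx_lists (m - 1) n. cmod (complex_of_real (A (j # is)) * prod_list (map y is)))"
    by (rule norm_sum)
  also have "\<dots> = (\<Sum>is\<in>idx_lists (m - 1) n. A (j # is) * prod_list (map (\<lambda>i. cmod (y i)) is))"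
  proof (rule sum.cong[OF refl])
    fix "is" assume "is \<in> idx_lists (m - 1) n"
    then show "cmod (complex_of_real (A (j # is)) * prod_list (map y is)) = A (j # is) * prod_list (map (\<lambda>i. cmod (y i)) is)"
      using assms by (simp add: norm_mult cmod_prod_list)
  qed
  finally show "cmod (\<Sum>is\<in>idx_lists (m - 1) n. complex_of_real (A (j # is)) * prod_list (map y is))
      \<le> (\<Sum>is\<in>idx_lists (m - 1) n. A (j # is) * prod_list (map (\<lambda>i. cmod (y i)) is))" .
qed

lemma term_le_tapp:
  fixes A :: "nat list \<Rightarrow> real"
  assumes "\<forall>is\<in>idx_lists (m - 1) n. 0 \<le> A (j # is)" "\<forall>i<n. 0 \<le> x i" "is0 \<in> idx_lists (m - 1) n"
  shows "A (j # is0) * prod_list (map x is0) \<le> tapp m n A x j"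
  unfolding tapp_def
proof (rule member_le_sum[OF assms(3) _ finite_idx])
  fix "is" assume is_in: "is \<in> idx_lists (m - 1) n - {is0}"
  have "0 \<le> prod_list (map x is)"
    using assms(2) idx_set is_in by (intro prod_list_nonneg_real) auto
  then show "0 \<le> A (j # is) * prod_list (map x is)"
    using assms(1) is_in by auto
qed

lemma all_eq_replicate: "(\<forall>j\<in>set xs. j = i) \<longleftrightarrow> xs = replicate (length xs) i"
  by (metis in_set_replicate replicate_length_same)

definition edges :: "nat \<Rightarrow> nat \<Rightarrow> (nat list \<Rightarrow> real) \<Rightarrow> (nat \<times> nat) set" where
  "edges m n A = {(i, j). i < n \<and> j < n \<and> j \<noteq> i \<and>
               (\<exists>is\<in>idx_lists (m - 1) n. A (i # is) \<noteq> 0 \<and> j \<in> set is)}"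

locale ztensor =
  fixes m n :: nat and A B :: "nat list \<Rightarrow> real" and s :: real
  assumes m2: "m \<ge> 2" and n1: "n \<ge> 1" and spos: "s > 0"
    and Bnn: "\<forall>is\<in>idx_lists m n. B is \<ge> 0"
    and AsB: "\<forall>is\<in>idx_lists m n. A is = s * ident_tensor is - B is"
    and wi: "weakly_irreducible m n A"
begin

lemma idx_cons': "i < n \<Longrightarrow> is \<in> idx_lists (m - 1) n \<Longrightarrow> i # is \<in> idx_lists m n"
  using idx_cons[of i n "is" "m - 1"] m2 by simp

lemma Bnn': "i < n \<Longrightarrow> \<forall>is\<in>idx_lists (m - 1) n. 0 \<le> B (i # is)"
  using Bnn idx_cons' by auto

lemma ident_sum:
  fixes x :: "nat \<Rightarrow> 'a::real_field"
  assumes "i < n"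
  shows "(\<Sum>is\<in>idx_lists (m - 1) n. of_real (ident_tensor (i # is)) * prod_list (map x is)) = x i ^ (m - 1)"
proof -
  have rin: "replicate (m - 1) i \<in> idx_lists (m - 1) n"
    using assms unfolding idx_lists_def by auto
  have "(\<Sum>is\<in>idx_lists (m - 1) n. of_real (ident_tensor (i # is)) * prod_list (map x is))
      = (\<Sum>is\<in>idx_lists (m - 1) n. if is = replicate (m - 1) i then prod_list (map x is) else 0)"
  proof (rule sum.cong[OF refl])
    fix "is" assume is_in: "is \<in> idx_lists (m - 1) n"
    have "(\<forall>j\<in>set (i # is). j = hd (i # is)) \<longleftrightarrow> is = replicate (m - 1) i"
      using all_eq_replicate[of "is" i] idx_len[OF is_in] by auto
    then show "of_real (ident_tensor (i # is)) * prod_list (map x is)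
        = (if is = replicate (m - 1) i then prod_list (map x is) else 0)"
      unfolding ident_tensor_def by auto
  qed
  also have "\<dots> = prod_list (map x (replicate (m - 1) i))"
    using rin finite_idx by (simp add: sum.delta)
  also have "\<dots> = x i ^ (m - 1)" by simp
  finally show ?thesis .
qed

lemma tapp_A_gen:
  fixes x :: "nat \<Rightarrow> 'a::real_field"
  assumes "i < n"
  shows "tapp m n (\<lambda>is. of_real (A is)) x i = of_real s * x i ^ (m - 1) - tapp m n (\<lambda>is. of_real (B is)) x i"
proof -
  have "tapp m n (\<lambda>is. of_real (A is)) x i
      = (\<Sum>is\<in>idx_lists (m - 1) n. of_real s * (of_real (ident_tensor (i # is)) * prod_list (map x is))
            - of_real (B (i # is)) * prod_list (map x is))"
    unfolding tapp_def
  proof (rule sum.cong[OF refl])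
    fix "is" assume "is \<in> idx_lists (m - 1) n"
    then have "A (i # is) = s * ident_tensor (i # is) - B (i # is)" using AsB idx_cons' assms by auto
    then have eq: "(of_real (A (i # is)) :: 'a) = of_real s * of_real (ident_tensor (i # is)) - of_real (B (i # is))"
      by simp
    have "of_real (A (i # is)) * prod_list (map x is) = (of_real s * of_real (ident_tensor (i # is)) - of_real (B (i # is))) * prod_list (map x is)"
      using eq by (simp only:)
    also have "\<dots> = of_real s * (of_real (ident_tensor (i # is)) * prod_list (map x is)) - of_real (B (i # is)) * prod_list (map x is)"
      by (simp add: algebra_simps)
    finally show "of_real (A (i # is)) * prod_list (map x is) =
      of_real s * (of_real (ident_tensor (i # is)) * prod_list (map x is)) - of_real (B (i # is)) * prod_list (map x is)" .
  qed
  also have "\<dots> = of_real s * x i ^ (m - 1) - tapp m n (\<lambda>is. of_real (B is)) x i"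
    unfolding tapp_def sum_subtractf sum_distrib_left[symmetric] ident_sum[OF assms] by simp
  finally show ?thesis .
qed

lemma tapp_A_real:
  assumes "i < n"
  shows "tapp m n A x i = s * x i ^ (m - 1) - tapp m n B x i"
  using tapp_A_gen[OF assms, of x] by (simp add: of_real_eq_id)

lemma tapp_A_cplx:
  assumes "i < n"
  shows "tapp m n (\<lambda>is. complex_of_real (A is)) x i
     = complex_of_real s * x i ^ (m - 1) - tapp m n (\<lambda>is. complex_of_real (B is)) x i"
  using tapp_A_gen[OF assms] by simp

lemma edge_B:
  assumes "(i, j) \<in> edges m n A"
  shows "\<exists>is\<in>idx_lists (m - 1) n. B (i # is) > 0 \<and> j \<in> set is \<and> i < n \<and> j < n"
proof -
  obtain "is" where is_in: "is \<in> idx_lists (m - 1) n" and nz: "A (i # is) \<noteq> 0" and j: "j \<in> set is"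
    and ij: "i < n" "j < n" "j \<noteq> i"
    using assms unfolding edges_def by auto
  have "ident_tensor (i # is) = 0" using j ij unfolding ident_tensor_def by auto
  then have "A (i # is) = - B (i # is)" using AsB idx_cons'[OF ij(1) is_in] by auto
  then have "B (i # is) > 0" using nz Bnn idx_cons'[OF ij(1) is_in] by force
  then show ?thesis using is_in j ij by auto
qed

lemma wi_closed:
  assumes "S \<subseteq> {0..<n}" "S \<noteq> {}" "\<And>i j. i \<in> S \<Longrightarrow> (i, j) \<in> edges m n A \<Longrightarrow> j \<in> S"
  shows "S = {0..<n}"
proof -
  have E: "\<forall>i<n. \<forall>j<n. (i, j) \<in> (edges m n A)\<^sup>*"
    using wi unfolding weakly_irreducible_def edges_def Let_def by simp
  obtain i where i: "i \<in> S" using assms(2) by auto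
  have "j \<in> S" if "j < n" for j
  proof -
    have "(i, j) \<in> (edges m n A)\<^sup>*" using E i assms(1) that by auto
    then show "j \<in> S"
    proof (induction rule: rtrancl_induct)
      case base then show ?case using i .
    next
      case (step y z) then show ?case using assms(3) by blast
    qed
  qed
  then show ?thesis using assms(1) by auto
qed

lemma wi_exit:
  assumes "S \<subseteq> {0..<n}" "S \<noteq> {}" "S \<noteq> {0..<n}"
  shows "\<exists>i\<in>S. \<exists>j. (i, j) \<in> edges m n A \<and> j \<notin> S"
  using wi_closed[OF assms(1,2)] assms(3) by blast

end


primrec cseq :: "real \<Rightarrow> nat \<Rightarrow> nat \<Rightarrow> real" where
  "cseq q k 0 = 1"
| "cseq q k (Suc L) = q * cseq q k L ^ k"

lemma cseq_ge1: assumes "q \<ge> 1" shows "cseq q k L \<ge> 1"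
proof (induction L)
  case 0 then show ?case by simp
next
  case (Suc L)
  then have h: "1 \<le> cseq q k L ^ k" by (simp add: one_le_power)
  have "(1::real) * 1 \<le> q * cseq q k L ^ k" by (rule mult_mono) (use assms h in auto)
  then show ?case by simp
qed

lemma cseq_mono: assumes "q \<ge> 1" "k \<ge> 1" shows "cseq q k L \<le> cseq q k (Suc L)"
proof -
  have c1: "cseq q k L \<ge> 1" using cseq_ge1 assms by blast
  have "cseq q k L = cseq q k L ^ 1" by simp
  also have "\<dots> \<le> cseq q k L ^ k" using c1 assms by (intro power_increasing) auto
  also have "\<dots> = 1 * cseq q k L ^ k" by simp
  also have "\<dots> \<le> q * cseq q k L ^ k" using c1 assms by (intro mult_right_mono) auto
  finally show ?thesis by simp
qed

context ztensor
begin

definition Mb :: real where "Mb = (\<Sum>is\<in>idx_lists m n. B is)"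
definition betab :: real where
  "betab = (if B ` {is\<in>idx_lists m n. B is > 0} = {} then 1 else Min (B ` {is\<in>idx_lists m n. B is > 0}))"
definition qb :: real where "qb = max 1 (Mb / betab)"
definition Cb :: real where "Cb = cseq qb (m - 1) n"

lemma Mb_nonneg: "0 \<le> Mb"
  unfolding Mb_def using Bnn by (auto intro: sum_nonneg)

lemma betab_pos: "0 < betab"
proof -
  have fin: "finite (B ` {is\<in>idx_lists m n. B is > 0})" using finite_idx by auto
  show ?thesis unfolding betab_def using fin by (auto simp: Min_gr_iff)
qed

lemma betab_le: "is \<in> idx_lists m n \<Longrightarrow> B is > 0 \<Longrightarrow> betab \<le> B is"
proof -
  assume a: "is \<in> idx_lists m n" "B is > 0"
  have fin: "finite (B ` {is\<in>idx_lists m n. B is > 0})" using finite_idx by auto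
  show ?thesis unfolding betab_def using a fin by (auto intro: Min_le)
qed

lemma qb_ge1: "qb \<ge> 1" unfolding qb_def by simp

lemma Cb_ge1: "Cb \<ge> 1" unfolding Cb_def by (rule cseq_ge1[OF qb_ge1])

lemma ratio_step:
  assumes pos: "\<forall>i<n. 0 < x i"
    and sup: "\<forall>i<n. tapp m n B x i \<le> R * x i ^ (m - 1)"
    and RM: "R \<le> Mb" and i0: "i0 < n" and amin: "\<forall>j<n. x i0 \<le> x j"
    and c1: "c \<ge> 1"
    and xi: "i < n" "x i \<le> c * x i0"
    and e: "(i, j) \<in> edges m n A"
  shows "x j \<le> qb * c ^ (m - 1) * x i0"
proof -
  define a where "a = x i0"
  have apos: "0 < a" using pos i0 a_def by auto
  obtain is0 where is0: "is0 \<in> idx_lists (m - 1) n" "B (i # is0) > 0" "j \<in> set is0" "j < n"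
    using edge_B[OF e] by auto
  have len: "length is0 = m - 1" using idx_len[OF is0(1)] .
  have xnn: "\<forall>k<n. 0 \<le> x k" using pos by (auto simp: less_imp_le)
  have low: "x j * a ^ (m - 2) \<le> prod_list (map x is0)"
  proof -
    have "\<forall>k\<in>set is0. a \<le> x k" using amin idx_set[OF is0(1)] a_def by auto
    from prod_list_lower[OF this apos is0(3)] len show ?thesis by (simp add: numeral_2_eq_2 diff_diff_left)
  qed
  have bet: "betab \<le> B (i # is0)" using betab_le[OF idx_cons'[OF xi(1) is0(1)] is0(2)] .
  have "betab * (x j * a ^ (m - 2)) \<le> B (i # is0) * prod_list (map x is0)"
    using bet low betab_pos apos pos is0(4) by (intro mult_mono) auto
  also have "\<dots> \<le> tapp m n B x i"
    using term_le_tapp[OF Bnn'[OF xi(1)] xnn is0(1)] .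
  also have "\<dots> \<le> R * x i ^ (m - 1)" using sup xi by auto
  also have "\<dots> \<le> Mb * x i ^ (m - 1)"
  proof -
    have "0 \<le> tapp m n B x i" using tapp_nonneg[OF Bnn'[OF xi(1)] xnn] .
    then have "0 \<le> R * x i ^ (m - 1)" using sup xi by (meson order_trans)
    moreover have "0 < x i ^ (m - 1)" using pos xi by auto
    ultimately show ?thesis using RM by (intro mult_right_mono) auto
  qed
  also have "\<dots> \<le> Mb * (c * a) ^ (m - 1)"
    using xi pos Mb_nonneg a_def by (intro mult_left_mono power_mono) (auto simp: less_imp_le)
  also have "\<dots> = (Mb * c ^ (m - 1) * a) * a ^ (m - 2)"
  proof -
    obtain k where k: "m - 1 = Suc k" "m - 2 = k" using m2 by (metis Suc_diff_Suc Suc_1 diff_Suc_1 less_le_trans lessI)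
    have "(c * a) ^ (m - 1) = c ^ (m - 1) * (a * a ^ (m - 2))"
      unfolding k power_mult_distrib power_Suc by (simp add: mult_ac)
    then show ?thesis by (simp only: mult.assoc)
  qed
  finally have "(betab * x j) * a ^ (m - 2) \<le> (Mb * c ^ (m - 1) * a) * a ^ (m - 2)"
    by (simp only: mult.assoc)
  moreover have "0 < a ^ (m - 2)" using apos by simp
  ultimately have "betab * x j \<le> Mb * c ^ (m - 1) * a"
    by (rule mult_right_le_imp_le)
  then have "(betab * x j) / betab \<le> (Mb * c ^ (m - 1) * a) / betab"
    using betab_pos by (intro divide_right_mono) auto
  then have "x j \<le> (Mb / betab) * c ^ (m - 1) * a"
    using betab_pos by simp
  also have "\<dots> \<le> qb * c ^ (m - 1) * a"
    using apos c1 unfolding qb_def by (intro mult_right_mono) auto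
  finally show ?thesis unfolding a_def .
qed

lemma ratio_bound:
  assumes pos: "\<forall>i<n. 0 < x i"
    and sup: "\<forall>i<n. tapp m n B x i \<le> R * x i ^ (m - 1)"
    and RM: "R \<le> Mb" and i0: "i0 < n" and amin: "\<forall>j<n. x i0 \<le> x j"
  shows "\<forall>j<n. x j \<le> Cb * x i0"
proof -
  define c where "c = cseq qb (m - 1)"
  define S where "S L = {j. j < n \<and> x j \<le> c L * x i0}" for L
  have apos: "0 < x i0" using pos i0 by auto
  have c1: "c L \<ge> 1" for L unfolding c_def by (rule cseq_ge1[OF qb_ge1])
  have cm: "c L \<le> c (Suc L)" for L unfolding c_def using m2 by (intro cseq_mono[OF qb_ge1]) auto
  have Ssub: "S L \<subseteq> {0..<n}" for L unfolding S_def by auto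
  have finS: "finite (S L)" for L using Ssub finite_subset by blast
  have i0S: "i0 \<in> S L" for L unfolding S_def using i0 c1[of L] apos by auto
  have mono: "S L \<subseteq> S (Suc L)" for L
  proof
    fix j assume "j \<in> S L"
    then have "x j \<le> c L * x i0" "j < n" unfolding S_def by auto
    moreover have "c L * x i0 \<le> c (Suc L) * x i0" using cm apos by (intro mult_right_mono) auto
    ultimately show "j \<in> S (Suc L)" unfolding S_def by auto
  qed
  have claim: "min (Suc L) n \<le> card (S L)" for L
  proof (induction L)
    case 0
    have "1 \<le> card (S 0)" using i0S[of 0] finS[of 0] by (metis One_nat_def Suc_leI card_gt_0_iff empty_iff)
    then show ?case by simp
  next
    case (Suc L)
    show ?case
    proof (cases "S L = {0..<n}")
      case True
      then have "S (Suc L) = {0..<n}" using mono[of L] Ssub[of "Suc L"] by auto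
      then show ?thesis by simp
    next
      case False
      obtain i j where ij: "i \<in> S L" "(i, j) \<in> edges m n A" "j \<notin> S L"
        using wi_exit[OF Ssub[of L] _ False] i0S[of L] by blast
      have i: "i < n" "x i \<le> c L * x i0" using ij(1) unfolding S_def by auto
      have jn: "j < n" using ij(2) unfolding edges_def by auto
      have "x j \<le> qb * c L ^ (m - 1) * x i0"
        using ratio_step[OF pos sup RM i0 amin c1 i ij(2)] .
      then have "j \<in> S (Suc L)" unfolding S_def c_def using jn by simp
      then have "S L \<subset> S (Suc L)" using mono[of L] ij(3) by auto
      then have "card (S L) < card (S (Suc L))" using finS by (intro psubset_card_mono) auto
      then show ?thesis using Suc.IH by simp
    qed
  qed
  have "n \<le> card (S n)" using claim[of n] by simp
  then have "S n = {0..<n}" using Ssub[of n]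
    by (metis card_atLeastLessThan card_seteq diff_zero finite_atLeastLessThan)
  show ?thesis
  proof (intro allI impI)
    fix j assume "j < n"
    then have "j \<in> S n" using \<open>S n = {0..<n}\<close> by simp
    then show "x j \<le> Cb * x i0" unfolding S_def c_def Cb_def by simp
  qed
qed

end

lemma bw_multi:
  fixes f :: "nat \<Rightarrow> nat \<Rightarrow> real"
  assumes "\<And>k i. i < N \<Longrightarrow> \<bar>f k i\<bar> \<le> C"
  shows "\<exists>\<sigma> l. strict_mono \<sigma> \<and> (\<forall>i<N. (\<lambda>k. f (\<sigma> k) i) \<longlonglongrightarrow> l i)"
  using assms
proof (induction N)
  case 0
  show ?case by (intro exI[of _ id] exI[of _ "\<lambda>_. 0"]) (simp add: strict_mono_def)
next
  case (Suc N)
  have "\<And>k i. i < N \<Longrightarrow> \<bar>f k i\<bar> \<le> C" using Suc.prems by simp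
  from Suc.IH[OF this] obtain \<sigma> l where sg: "strict_mono \<sigma>" and conv: "\<forall>i<N. (\<lambda>k. f (\<sigma> k) i) \<longlonglongrightarrow> l i"
    by blast
  have "bounded (range (\<lambda>k. f (\<sigma> k) N))"
    unfolding bounded_iff using Suc.prems by (intro exI[of _ C]) auto
  then obtain l' \<tau> where tau: "strict_mono \<tau>" and c': "((\<lambda>k. f (\<sigma> k) N) \<circ> \<tau>) \<longlonglongrightarrow> l'"
    using bounded_imp_convergent_subsequence by blast
  show ?case
  proof (intro exI conjI allI impI)
    show "strict_mono (\<sigma> \<circ> \<tau>)" using sg tau by (rule strict_mono_o)
    fix i assume iN: "i < Suc N"
    show "(\<lambda>k. f ((\<sigma> \<circ> \<tau>) k) i) \<longlonglongrightarrow> (l(N := l')) i"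
    proof (cases "i = N")
      case True then show ?thesis using c' by (simp add: o_def)
    next
      case False
      then have "i < N" using iN by simp
      then have "(\<lambda>k. f (\<sigma> k) i) \<longlonglongrightarrow> l i" using conv by auto
      from LIMSEQ_subseq_LIMSEQ[OF this tau] show ?thesis using False by (simp add: o_def)
    qed
  qed
qed

lemma prod_list_tendsto:
  fixes f :: "nat \<Rightarrow> nat \<Rightarrow> real"
  shows "\<forall>i\<in>set xs. (\<lambda>k. f k i) \<longlonglongrightarrow> x i \<Longrightarrow> (\<lambda>k. prod_list (map (f k) xs)) \<longlonglongrightarrow> prod_list (map x xs)"
proof (induction xs)
  case Nil then show ?case by simp
next
  case (Cons a xs)
  then have "(\<lambda>k. f k a * prod_list (map (f k) xs)) \<longlonglongrightarrow> x a * prod_list (map x xs)"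
    by (intro tendsto_mult) auto
  then show ?case by simp
qed

lemma tapp_tendsto:
  fixes A :: "nat list \<Rightarrow> real" and f :: "nat \<Rightarrow> nat \<Rightarrow> real"
  assumes "\<forall>i<n. (\<lambda>k. f k i) \<longlonglongrightarrow> x i"
  shows "(\<lambda>k. tapp m n A (f k) j) \<longlonglongrightarrow> tapp m n A x j"
  unfolding tapp_def
proof (rule tendsto_sum)
  fix "is" assume "is \<in> idx_lists (m - 1) n"
  then have "\<forall>i\<in>set is. (\<lambda>k. f k i) \<longlonglongrightarrow> x i" using assms idx_set by blast
  then show "(\<lambda>k. A (j # is) * prod_list (map (f k) is)) \<longlonglongrightarrow> A (j # is) * prod_list (map x is)"
    by (intro tendsto_mult_left prod_list_tendsto)
qed

lemma ex_argmin:
  fixes f :: "nat \<Rightarrow> real"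
  assumes "n \<ge> 1" shows "\<exists>i0<n. \<forall>j<n. f i0 \<le> f j"
proof -
  have fin: "finite (f ` {0..<n})" "f ` {0..<n} \<noteq> {}" using assms by auto
  obtain i0 where "i0 \<in> {0..<n}" "f i0 = Min (f ` {0..<n})" using Min_in[OF fin] by auto
  then show ?thesis using Min_le[OF fin(1)] by (intro exI[of _ i0]) auto
qed

lemma ex_argmax:
  fixes f :: "nat \<Rightarrow> real"
  assumes "n \<ge> 1" shows "\<exists>i0<n. \<forall>j<n. f j \<le> f i0"
proof -
  have fin: "finite (f ` {0..<n})" "f ` {0..<n} \<noteq> {}" using assms by auto
  obtain i0 where "i0 \<in> {0..<n}" "f i0 = Max (f ` {0..<n})" using Max_in[OF fin] by auto
  then show ?thesis using Max_ge[OF fin(1)] by (intro exI[of _ i0]) auto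
qed

context ztensor
begin

definition Kset :: "(nat \<Rightarrow> real) set" where
  "Kset = {x. x \<in> vecs n \<and> (\<forall>i<n. 1 \<le> x i \<and> x i \<le> Cb)}"

definition Sset :: "real set" where
  "Sset = {R. 0 \<le> R \<and> (\<exists>x\<in>Kset. \<forall>i<n. tapp m n B x i \<le> R * x i ^ (m - 1))}"

definition rho0 :: real where "rho0 = Inf Sset"

lemma Mb_in_Sset: "Mb \<in> Sset"
proof -
  define o1 where "o1 = (\<lambda>i::nat. if i < n then (1::real) else 0)"
  have o1K: "o1 \<in> Kset" unfolding Kset_def vecs_def o1_def using Cb_ge1 by auto
  have "tapp m n B o1 i \<le> Mb * o1 i ^ (m - 1)" if i: "i < n" for i
  proof -
    have "tapp m n B o1 i = (\<Sum>is\<in>idx_lists (m - 1) n. B (i # is))"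
      unfolding tapp_def
    proof (rule sum.cong[OF refl])
      fix "is" assume "is \<in> idx_lists (m - 1) n"
      then have "map o1 is = map (\<lambda>_. 1) is" unfolding o1_def by (auto dest: idx_set)
      then have "prod_list (map o1 is) = prod_list (map (\<lambda>_. 1::real) is)" by (simp only:)
      also have "\<dots> = 1" by (induction "is") auto
      finally show "B (i # is) * prod_list (map o1 is) = B (i # is)" by simp
    qed
    also have "\<dots> = (\<Sum>l\<in>Cons i ` idx_lists (m - 1) n. B l)"
      by (simp add: sum.reindex)
    also have "\<dots> \<le> (\<Sum>l\<in>idx_lists m n. B l)"
      using finite_idx idx_cons'[OF i] Bnn by (intro sum_mono2) auto
    finally show ?thesis unfolding Mb_def o1_def using i by simp
  qed
  then show ?thesis unfolding Sset_def using Mb_nonneg o1K by auto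
qed

lemma Sset_bdd: "bdd_below Sset"
  unfolding Sset_def bdd_below_def by auto

lemma rho0_nonneg: "0 \<le> rho0"
  unfolding rho0_def using Mb_in_Sset by (intro cInf_greatest) (auto simp: Sset_def)

lemma rho0_le_Mb: "rho0 \<le> Mb"
  unfolding rho0_def using Mb_in_Sset Sset_bdd by (rule cInf_lower)

lemma rho0_attained: "\<exists>x\<in>Kset. \<forall>i<n. tapp m n B x i \<le> rho0 * x i ^ (m - 1)"
proof -
  have "\<forall>k. \<exists>R x. R \<in> Sset \<and> R < rho0 + inverse (real (Suc k)) \<and> x \<in> Kset \<and>
           (\<forall>i<n. tapp m n B x i \<le> R * x i ^ (m - 1))"
  proof
    fix k
    have "Inf Sset < rho0 + inverse (real (Suc k))" unfolding rho0_def by simp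
    then obtain R where R: "R \<in> Sset" "R < rho0 + inverse (real (Suc k))"
      using cInf_less_iff[OF _ Sset_bdd] Mb_in_Sset by blast
    then show "\<exists>R x. R \<in> Sset \<and> R < rho0 + inverse (real (Suc k)) \<and> x \<in> Kset \<and>
           (\<forall>i<n. tapp m n B x i \<le> R * x i ^ (m - 1))"
      unfolding Sset_def by blast
  qed
  then obtain Rk xk where RX: "\<And>k. Rk k \<in> Sset" "\<And>k. Rk k < rho0 + inverse (real (Suc k))"
    "\<And>k. xk k \<in> Kset" "\<And>k. \<forall>i<n. tapp m n B (xk k) i \<le> Rk k * xk k i ^ (m - 1)"
    by metis
  have Rlim: "Rk \<longlonglongrightarrow> rho0"
  proof (rule tendsto_sandwich[of "\<lambda>_. rho0" _ _ "\<lambda>k. rho0 + inverse (real (Suc k))"])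
    show "\<forall>\<^sub>F k in sequentially. rho0 \<le> Rk k"
      unfolding rho0_def by (intro always_eventually allI cInf_lower[OF RX(1) Sset_bdd])
    show "\<forall>\<^sub>F k in sequentially. Rk k \<le> rho0 + inverse (real (Suc k))"
      using RX(2) by (intro always_eventually allI less_imp_le)
    show "(\<lambda>_. rho0) \<longlonglongrightarrow> rho0" by simp
    have "(\<lambda>k. rho0 + inverse (real (Suc k))) \<longlonglongrightarrow> rho0 + 0"
      by (intro tendsto_add tendsto_const LIMSEQ_inverse_real_of_nat)
    then show "(\<lambda>k. rho0 + inverse (real (Suc k))) \<longlonglongrightarrow> rho0" by simp
  qed
  have bnd: "\<bar>xk k i\<bar> \<le> Cb" if "i < n" for k i
    using RX(3)[of k] that unfolding Kset_def by auto
  obtain \<sigma> l where sg: "strict_mono \<sigma>" and conv: "\<forall>i<n. (\<lambda>k. xk (\<sigma> k) i) \<longlonglongrightarrow> l i"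
    using bw_multi[of n xk Cb, OF bnd] by blast
  define x where "x = (\<lambda>i. if i < n then l i else 0)"
  have convx: "\<forall>i<n. (\<lambda>k. xk (\<sigma> k) i) \<longlonglongrightarrow> x i" using conv unfolding x_def by auto
  have xK: "x \<in> Kset"
  proof -
    have "1 \<le> x i \<and> x i \<le> Cb" if i: "i < n" for i
    proof
      show "1 \<le> x i"
        using convx i RX(3) unfolding Kset_def by (intro LIMSEQ_le_const[of "\<lambda>k. xk (\<sigma> k) i"]) auto
      show "x i \<le> Cb"
        using convx i RX(3) unfolding Kset_def by (intro LIMSEQ_le_const2[of "\<lambda>k. xk (\<sigma> k) i"]) auto
    qed
    moreover have "x \<in> vecs n" unfolding x_def vecs_def by auto
    ultimately show ?thesis unfolding Kset_def by auto
  qed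
  have "tapp m n B x i \<le> rho0 * x i ^ (m - 1)" if i: "i < n" for i
  proof (rule LIMSEQ_le)
    show "(\<lambda>k. tapp m n B (xk (\<sigma> k)) i) \<longlonglongrightarrow> tapp m n B x i"
      using convx by (rule tapp_tendsto)
    have "(\<lambda>k. Rk (\<sigma> k)) \<longlonglongrightarrow> rho0" using LIMSEQ_subseq_LIMSEQ[OF Rlim sg] by (simp add: o_def)
    then show "(\<lambda>k. Rk (\<sigma> k) * xk (\<sigma> k) i ^ (m - 1)) \<longlonglongrightarrow> rho0 * x i ^ (m - 1)"
      using convx i by (intro tendsto_mult tendsto_power) auto
    show "\<exists>N. \<forall>k\<ge>N. tapp m n B (xk (\<sigma> k)) i \<le> Rk (\<sigma> k) * xk (\<sigma> k) i ^ (m - 1)"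
      using RX(4) i by blast
  qed
  then show ?thesis using xK by blast
qed

lemma rho0_min:
  assumes pos: "\<forall>i<n. 0 < x i" and sup: "\<forall>i<n. tapp m n B x i \<le> R * x i ^ (m - 1)"
  shows "rho0 \<le> R"
proof (cases "Mb \<le> R")
  case True then show ?thesis using rho0_le_Mb by simp
next
  case False
  then have RM: "R \<le> Mb" by simp
  have Rnn: "0 \<le> R"
  proof -
    have "0 \<le> tapp m n B x 0" using tapp_nonneg[OF Bnn'] pos n1 by (auto simp: less_imp_le)
    then have "0 \<le> R * x 0 ^ (m - 1)" using sup n1 by (meson less_le_trans order_trans zero_less_one)
    moreover have "0 < x 0 ^ (m - 1)" using pos n1 by simp
    ultimately show ?thesis by (simp add: zero_le_mult_iff)
  qed
  obtain i0 where i0: "i0 < n" "\<forall>j<n. x i0 \<le> x j" using ex_argmin[OF n1] by blast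
  have bound: "\<forall>j<n. x j \<le> Cb * x i0" using ratio_bound[OF pos sup RM i0] .
  have xi0: "0 < x i0" using pos i0 by auto
  define y where "y = (\<lambda>i. if i < n then inverse (x i0) * x i else 0)"
  have yK: "y \<in> Kset"
  proof -
    have "1 \<le> y i \<and> y i \<le> Cb" if i: "i < n" for i
    proof
      show "1 \<le> y i" using i i0 xi0 unfolding y_def by (simp add: field_simps)
      show "y i \<le> Cb" using i bound xi0 unfolding y_def by (simp add: field_simps)
    qed
    moreover have "y \<in> vecs n" unfolding y_def vecs_def by auto
    ultimately show ?thesis unfolding Kset_def by auto
  qed
  have "tapp m n B y i \<le> R * y i ^ (m - 1)" if i: "i < n" for i
  proof -
    have "tapp m n B y i = tapp m n B (\<lambda>i. inverse (x i0) * x i) i"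
      by (rule tapp_cong) (simp add: y_def)
    also have "\<dots> = inverse (x i0) ^ (m - 1) * tapp m n B x i" by (rule tapp_scale)
    also have "\<dots> \<le> inverse (x i0) ^ (m - 1) * (R * x i ^ (m - 1))"
      using sup i xi0 by (intro mult_left_mono) auto
    also have "\<dots> = R * y i ^ (m - 1)" using i unfolding y_def by (simp add: power_mult_distrib)
    finally show ?thesis .
  qed
  then have "R \<in> Sset" unfolding Sset_def using Rnn yK by auto
  then show ?thesis unfolding rho0_def using Sset_bdd by (rule cInf_lower)
qed

end

context ztensor
begin

definition Good :: "(nat \<Rightarrow> real) set" where
  "Good = {x. x \<in> vecs n \<and> (\<forall>i<n. 0 < x i) \<and> (\<forall>i<n. tapp m n B x i \<le> rho0 * x i ^ (m - 1))}"

definition Tst :: "(nat \<Rightarrow> real) \<Rightarrow> nat set" where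
  "Tst x = {i. i < n \<and> tapp m n B x i < rho0 * x i ^ (m - 1)}"

lemma Tst_sub: "Tst x \<subseteq> {0..<n}" unfolding Tst_def by auto

lemma fin_Tst: "finite (Tst x)" using Tst_sub finite_subset by blast

lemma perturb:
  assumes xG: "x \<in> Good" and ne: "Tst x \<noteq> {}" and nall: "Tst x \<noteq> {0..<n}"
  shows "\<exists>x'\<in>Good. card (Tst x) < card (Tst x')"
proof -
  have xv: "x \<in> vecs n" and pos: "\<forall>i<n. 0 < x i"
    and sup: "\<forall>i<n. tapp m n B x i \<le> rho0 * x i ^ (m - 1)" using xG unfolding Good_def by auto
  have xnn: "\<forall>i<n. 0 \<le> x i" using pos by (auto simp: less_imp_le)
  obtain i1 where i1: "i1 \<in> Tst x" using ne by auto
  have i1n: "i1 < n" using i1 unfolding Tst_def by auto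
  have den: "0 < rho0 * x i ^ (m - 1)" if "i \<in> Tst x" for i
  proof -
    have "i < n" "tapp m n B x i < rho0 * x i ^ (m - 1)" using that unfolding Tst_def by auto
    moreover have "0 \<le> tapp m n B x i" using tapp_nonneg[OF Bnn'[OF \<open>i < n\<close>] xnn] .
    ultimately show ?thesis by linarith
  qed
  define ratio where "ratio i = tapp m n B x i / (rho0 * x i ^ (m - 1))" for i
  define q where "q = Max (ratio ` Tst x)"
  have finR: "finite (ratio ` Tst x)" "ratio ` Tst x \<noteq> {}" using fin_Tst ne by auto
  have rlt: "ratio i < 1" if "i \<in> Tst x" for i
    using that den[OF that] unfolding ratio_def Tst_def by (simp add: pos_divide_less_eq)
  have q1: "q < 1" unfolding q_def using Max_less_iff[OF finR] rlt by auto
  have rge: "ratio i \<le> q" if "i \<in> Tst x" for i unfolding q_def using Max_ge[OF finR(1)] that by auto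
  have q0: "0 \<le> q"
  proof -
    have "0 \<le> tapp m n B x i1" using tapp_nonneg[OF Bnn'[OF i1n] xnn] .
    then have "0 \<le> ratio i1" unfolding ratio_def using den[OF i1] by simp
    then show ?thesis using rge[OF i1] by simp
  qed
  have rle: "tapp m n B x i \<le> q * (rho0 * x i ^ (m - 1))" if "i \<in> Tst x" for i
    using rge[OF that] den[OF that] unfolding ratio_def by (simp add: pos_divide_le_eq)
  have m1: "0 < m - 1" using m2 by simp
  define t where "t = root (m - 1) ((1 + q) / 2)"
  have tpow: "t ^ (m - 1) = (1 + q) / 2" unfolding t_def using real_root_pow_pos2[OF m1] q0 by simp
  have tpos: "0 < t" unfolding t_def using q0 m1 by (simp add: real_root_gt_zero)
  have tlt1: "t < 1" unfolding t_def using real_root_lt_1_iff[OF m1] q1 by simp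
  define x' where "x' i = (if i \<in> Tst x then t * x i else x i)" for i
  have x'le: "\<forall>i<n. 0 \<le> x' i \<and> x' i \<le> x i"
  proof (intro allI impI)
    fix i assume i: "i < n"
    show "0 \<le> x' i \<and> x' i \<le> x i"
      using pos i tpos tlt1 unfolding x'_def by (auto simp: less_imp_le mult_le_cancel_right1)
  qed
  have x'pos: "\<forall>i<n. 0 < x' i" using pos tpos unfolding x'_def by auto
  have x'v: "x' \<in> vecs n" using xv unfolding vecs_def x'_def Tst_def by auto
  have tmono: "tapp m n B x' i \<le> tapp m n B x i" if "i < n" for i
    using tapp_mono[OF Bnn'[OF that] x'le] .
  have inT: "tapp m n B x' i < rho0 * x' i ^ (m - 1)" if iT: "i \<in> Tst x" for i
  proof -
    have i: "i < n" using iT unfolding Tst_def by auto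
    have "tapp m n B x' i \<le> q * (rho0 * x i ^ (m - 1))" using tmono[OF i] rle[OF iT] by linarith
    also have "\<dots> < ((1 + q) / 2) * (rho0 * x i ^ (m - 1))"
      using q1 den[OF iT] by (intro mult_strict_right_mono) auto
    also have "\<dots> = rho0 * (t ^ (m - 1) * x i ^ (m - 1))" using tpow by (simp add: ac_simps)
    also have "\<dots> = rho0 * (t * x i) ^ (m - 1)" by (simp add: power_mult_distrib)
    also have "\<dots> = rho0 * x' i ^ (m - 1)" using iT unfolding x'_def by simp
    finally show ?thesis .
  qed
  have notT: "tapp m n B x' i \<le> rho0 * x' i ^ (m - 1)" if i: "i < n" "i \<notin> Tst x" for i
  proof -
    have "tapp m n B x' i \<le> tapp m n B x i" using tmono[OF i(1)] .
    also have "\<dots> \<le> rho0 * x i ^ (m - 1)" using sup i by auto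
    also have "\<dots> = rho0 * x' i ^ (m - 1)" using i unfolding x'_def by simp
    finally show ?thesis .
  qed
  have x'G: "x' \<in> Good"
  proof -
    have "\<forall>i<n. tapp m n B x' i \<le> rho0 * x' i ^ (m - 1)"
    proof (intro allI impI)
      fix i assume i: "i < n"
      show "tapp m n B x' i \<le> rho0 * x' i ^ (m - 1)"
      proof (cases "i \<in> Tst x")
        case True then show ?thesis using inT[OF True] by simp
      next
        case False then show ?thesis using notT[OF i False] by simp
      qed
    qed
    then show ?thesis unfolding Good_def using x'v x'pos by auto
  qed
  have sub: "Tst x \<subseteq> Tst x'"
  proof
    fix i assume iT: "i \<in> Tst x"
    then have "i < n" unfolding Tst_def by auto
    then show "i \<in> Tst x'" using inT[OF iT] unfolding Tst_def by auto
  qed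
  define U where "U = {0..<n} - Tst x"
  have U1: "U \<subseteq> {0..<n}" unfolding U_def by auto
  have U2: "U \<noteq> {}" unfolding U_def using nall Tst_sub by auto
  have i1U: "i1 \<notin> U" unfolding U_def using i1 by simp
  have U3: "U \<noteq> {0..<n}"
  proof
    assume "U = {0..<n}"
    then have "i1 \<in> U" using i1n by simp
    then show False using i1U by simp
  qed
  obtain j k where jk: "j \<in> U" "(j, k) \<in> edges m n A" "k \<notin> U" using wi_exit[OF U1 U2 U3] by blast
  have jn: "j < n" "j \<notin> Tst x" using jk(1) unfolding U_def by auto
  have kn0: "k < n" using jk(2) unfolding edges_def by simp
  have kT: "k \<in> Tst x" using jk(3) kn0 unfolding U_def by simp
  obtain is0 where is0: "is0 \<in> idx_lists (m - 1) n" "B (j # is0) > 0" "k \<in> set is0"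
    using edge_B[OF jk(2)] by blast
  have strict: "tapp m n B x' j < tapp m n B x j"
    unfolding tapp_def
  proof (rule sum_strict_mono_ex1[OF finite_idx])
    show "\<forall>is\<in>idx_lists (m - 1) n. B (j # is) * prod_list (map x' is) \<le> B (j # is) * prod_list (map x is)"
    proof
      fix "is" assume is_in: "is \<in> idx_lists (m - 1) n"
      have "prod_list (map x' is) \<le> prod_list (map x is)"
        using x'le idx_set[OF is_in] by (intro prod_list_mono_nonneg) auto
      then show "B (j # is) * prod_list (map x' is) \<le> B (j # is) * prod_list (map x is)"
        using Bnn'[OF jn(1)] is_in by (intro mult_left_mono) auto
    qed
    have kn: "k < n" using kT unfolding Tst_def by auto
    have "prod_list (map x' is0) < prod_list (map x is0)"
    proof (rule prod_list_strict[of is0 x' x k])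
      show "\<forall>k\<in>set is0. 0 < x' k \<and> x' k \<le> x k" using x'le x'pos idx_set[OF is0(1)] by auto
      show "k \<in> set is0" using is0(3) .
      show "x' k < x k" using kT pos kn tlt1 unfolding x'_def by simp
    qed
    then have "B (j # is0) * prod_list (map x' is0) < B (j # is0) * prod_list (map x is0)"
      using is0(2) by (intro mult_strict_left_mono) auto
    then show "\<exists>is\<in>idx_lists (m - 1) n. B (j # is) * prod_list (map x' is) < B (j # is) * prod_list (map x is)"
      using is0(1) by (rule bexI[of _ is0])
  qed
  have "j \<in> Tst x'"
  proof -
    have xj: "x' j = x j" using jn(2) unfolding x'_def by simp
    have "tapp m n B x j \<le> rho0 * x j ^ (m - 1)" using sup jn(1) by simp
    then have "tapp m n B x' j < rho0 * x' j ^ (m - 1)" using strict xj by simp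
    then show ?thesis unfolding Tst_def using jn(1) by simp
  qed
  then have "Tst x \<subset> Tst x'" using sub jn(2) by auto
  then have "card (Tst x) < card (Tst x')" using fin_Tst by (intro psubset_card_mono) auto
  then show ?thesis using x'G by blast
qed

lemma eigvec_exists:
  "\<exists>v. v \<in> vecs n \<and> (\<forall>i<n. 0 < v i) \<and> v 0 = 1 \<and> (\<forall>i<n. tapp m n B v i = rho0 * v i ^ (m - 1))"
proof -
  obtain x0 where x0: "x0 \<in> Kset" "\<forall>i<n. tapp m n B x0 i \<le> rho0 * x0 i ^ (m - 1)"
    using rho0_attained by blast
  have x0G: "x0 \<in> Good" using x0 unfolding Good_def Kset_def by fastforce
  have cb: "\<forall>y. y \<in> Good \<longrightarrow> card (Tst y) < Suc n"
  proof (intro allI impI)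
    fix y
    have "card (Tst y) \<le> card {0..<n}" using Tst_sub by (intro card_mono) auto
    then show "card (Tst y) < Suc n" by simp
  qed
  obtain x where xG: "x \<in> Good" and xmax: "\<forall>y. y \<in> Good \<longrightarrow> card (Tst y) \<le> card (Tst x)"
    using ex_has_greatest_nat[of "\<lambda>y. y \<in> Good" x0 "\<lambda>y. card (Tst y)" "Suc n", OF x0G cb] by blast
  have pos: "\<forall>i<n. 0 < x i" and sup: "\<forall>i<n. tapp m n B x i \<le> rho0 * x i ^ (m - 1)" and xv: "x \<in> vecs n"
    using xG unfolding Good_def by auto
  have Tx: "Tst x = {}"
  proof (rule ccontr)
    assume ne: "Tst x \<noteq> {}"
    show False
    proof (cases "Tst x = {0..<n}")
      case True
      define R' where "R' = Max ((\<lambda>i. tapp m n B x i / x i ^ (m - 1)) ` {0..<n})"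
      have fin: "finite ((\<lambda>i. tapp m n B x i / x i ^ (m - 1)) ` {0..<n})"
        "(\<lambda>i. tapp m n B x i / x i ^ (m - 1)) ` {0..<n} \<noteq> {}" using n1 by auto
      have "R' < rho0"
        unfolding R'_def Max_less_iff[OF fin]
      proof
        fix r assume "r \<in> (\<lambda>i. tapp m n B x i / x i ^ (m - 1)) ` {0..<n}"
        then obtain i where i: "i < n" "r = tapp m n B x i / x i ^ (m - 1)" by auto
        have "i \<in> Tst x" using True i by auto
        then have "tapp m n B x i < rho0 * x i ^ (m - 1)" unfolding Tst_def by auto
        then show "r < rho0" using i pos by (simp add: pos_divide_less_eq)
      qed
      moreover have "\<forall>i<n. tapp m n B x i \<le> R' * x i ^ (m - 1)"
      proof (intro allI impI)
        fix i assume i: "i < n"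
        have "tapp m n B x i / x i ^ (m - 1) \<le> R'" unfolding R'_def using fin i by (intro Max_ge) auto
        then show "tapp m n B x i \<le> R' * x i ^ (m - 1)" using i pos by (simp add: pos_divide_le_eq)
      qed
      then have "rho0 \<le> R'" using rho0_min[OF pos] by blast
      ultimately show False by simp
    next
      case False
      from perturb[OF xG ne False] obtain x' where "x' \<in> Good" "card (Tst x) < card (Tst x')" by blast
      then show False using xmax by fastforce
    qed
  qed
  have eq: "tapp m n B x i = rho0 * x i ^ (m - 1)" if i: "i < n" for i
    using Tx sup i unfolding Tst_def by fastforce
  have x0p: "0 < x 0" using pos n1 by auto
  define v where "v i = (if i < n then inverse (x 0) * x i else 0)" for i
  have "v \<in> vecs n" unfolding v_def vecs_def by auto
  moreover have "\<forall>i<n. 0 < v i" using pos x0p unfolding v_def by auto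
  moreover have "v 0 = 1" using x0p n1 unfolding v_def by simp
  moreover have "\<forall>i<n. tapp m n B v i = rho0 * v i ^ (m - 1)"
  proof (intro allI impI)
    fix i assume i: "i < n"
    have "tapp m n B v i = tapp m n B (\<lambda>i. inverse (x 0) * x i) i"
      by (rule tapp_cong) (simp add: v_def)
    also have "\<dots> = inverse (x 0) ^ (m - 1) * tapp m n B x i" by (rule tapp_scale)
    also have "\<dots> = rho0 * v i ^ (m - 1)" using eq[OF i] i unfolding v_def by (simp add: power_mult_distrib)
    finally show "tapp m n B v i = rho0 * v i ^ (m - 1)" .
  qed
  ultimately show ?thesis by blast
qed

end

context ztensor
begin

lemma eig_bound:
  assumes v: "\<forall>i<n. 0 < v i" "\<forall>i<n. tapp m n B v i = rho0 * v i ^ (m - 1)"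
    and y: "\<exists>i<n. y i \<noteq> 0" "\<forall>i<n. tapp m n (\<lambda>is. complex_of_real (B is)) y i = lam * y i ^ (m - 1)"
  shows "cmod lam \<le> rho0"
proof -
  obtain i0 where i0: "i0 < n" "\<forall>j<n. cmod (y j) / v j \<le> cmod (y i0) / v i0"
    using ex_argmax[OF n1, of "\<lambda>j. cmod (y j) / v j"] by blast
  define t where "t = cmod (y i0) / v i0"
  obtain i1 where i1: "i1 < n" "y i1 \<noteq> 0" using y(1) by blast
  have "0 < cmod (y i1) / v i1" using i1 v(1) by simp
  then have tpos: "0 < t" using i0(2) i1(1) unfolding t_def by (meson less_le_trans)
  have yle: "\<forall>j<n. 0 \<le> cmod (y j) \<and> cmod (y j) \<le> t * v j"
  proof (intro allI impI conjI)
    fix j assume j: "j < n"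
    show "0 \<le> cmod (y j)" by simp
    have "cmod (y j) / v j \<le> t" using i0(2) j unfolding t_def by auto
    then show "cmod (y j) \<le> t * v j" using v(1) j by (simp add: pos_divide_le_eq)
  qed
  have "0 < v i0" using v(1) i0(1) by simp
  then have yi0: "cmod (y i0) = t * v i0" unfolding t_def by simp
  have ypos: "0 < cmod (y i0)" using yi0 tpos v(1) i0(1) by simp
  have "cmod lam * cmod (y i0) ^ (m - 1) = cmod (tapp m n (\<lambda>is. complex_of_real (B is)) y i0)"
    using y(2) i0(1) by (simp add: norm_mult norm_power)
  also have "\<dots> \<le> tapp m n B (\<lambda>i. cmod (y i)) i0" by (rule cmod_tapp_le[OF Bnn'[OF i0(1)]])
  also have "\<dots> \<le> tapp m n B (\<lambda>i. t * v i) i0" by (rule tapp_mono[OF Bnn'[OF i0(1)]]) (use yle in auto)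
  also have "\<dots> = t ^ (m - 1) * tapp m n B v i0" by (rule tapp_scale)
  also have "\<dots> = rho0 * cmod (y i0) ^ (m - 1)" using v(2) i0(1) yi0 by (simp add: power_mult_distrib)
  finally have "cmod lam * cmod (y i0) ^ (m - 1) \<le> rho0 * cmod (y i0) ^ (m - 1)" .
  moreover have "0 < cmod (y i0) ^ (m - 1)" using ypos by simp
  ultimately show ?thesis by simp
qed

lemma cvec_of_real: "v \<in> vecs n \<Longrightarrow> (\<lambda>i. complex_of_real (v i)) \<in> vecs n"
  unfolding vecs_def by auto

lemma spectral_radius_B: "spectral_radius m n B = rho0"
proof -
  obtain v where v: "v \<in> vecs n" "\<forall>i<n. 0 < v i" "v 0 = 1" "\<forall>i<n. tapp m n B v i = rho0 * v i ^ (m - 1)"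
    using eigvec_exists by blast
  have ep: "is_eigpair m n B (complex_of_real rho0) (\<lambda>i. complex_of_real (v i))"
    unfolding is_eigpair_def
  proof (intro conjI)
    show "(\<lambda>i. complex_of_real (v i)) \<in> vecs n" using cvec_of_real[OF v(1)] .
    show "\<exists>i<n. complex_of_real (v i) \<noteq> 0" using v(3) n1 by (intro exI[of _ 0]) auto
    show "\<forall>i<n. tapp m n (\<lambda>is. complex_of_real (B is)) (\<lambda>i. complex_of_real (v i)) i =
        complex_of_real rho0 * complex_of_real (v i) ^ (m - 1)"
      using v(4) by (simp add: tapp_of_real)
  qed
  show ?thesis unfolding spectral_radius_def
  proof (rule cSup_eq_maximum)
    show "rho0 \<in> {cmod lam |lam. eigenvalue m n B lam}"
      using ep rho0_nonneg unfolding eigenvalue_def by (intro CollectI exI[of _ "complex_of_real rho0"]) auto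
    fix r assume "r \<in> {cmod lam |lam. eigenvalue m n B lam}"
    then obtain lam y where r: "r = cmod lam" and yp: "is_eigpair m n B lam y"
      unfolding eigenvalue_def by auto
    then show "r \<le> rho0" using eig_bound[OF v(2) v(4)] unfolding is_eigpair_def by auto
  qed
qed

definition wv :: "nat \<Rightarrow> real" where "wv = perron_vec m n B"

lemma wv_props: "wv \<in> vecs n" "\<forall>i<n. 0 < wv i" "wv 0 = 1" "\<forall>i<n. tapp m n B wv i = rho0 * wv i ^ (m - 1)"
proof -
  define P where "P = (\<lambda>v. v \<in> vecs n \<and> (\<forall>i<n. 0 < v i) \<and> v 0 = 1 \<and> (\<forall>i<n. tapp m n B v i = rho0 * v i ^ (m - 1)))"
  obtain v0 where "P v0" using eigvec_exists unfolding P_def by blast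
  then have "P (SOME v. P v)" using someI[of P v0] by blast
  moreover have "wv = (SOME v. P v)" unfolding wv_def perron_vec_def spectral_radius_B P_def by simp
  ultimately have "P wv" by simp
  then show "wv \<in> vecs n" "\<forall>i<n. 0 < wv i" "wv 0 = 1" "\<forall>i<n. tapp m n B wv i = rho0 * wv i ^ (m - 1)"
    unfolding P_def by auto
qed

lemma lambda_min_eq: "lambda_min m n A = s - rho0"
  unfolding lambda_min_def
proof (rule Least_equality)
  have "\<forall>i<n. tapp m n A wv i = (s - rho0) * wv i ^ (m - 1)"
  proof (intro allI impI)
    fix i assume i: "i < n"
    have "tapp m n A wv i = s * wv i ^ (m - 1) - tapp m n B wv i" using tapp_A_real[OF i] .
    also have "\<dots> = s * wv i ^ (m - 1) - rho0 * wv i ^ (m - 1)" using wv_props(4) i by simp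
    also have "\<dots> = (s - rho0) * wv i ^ (m - 1)" by (simp add: algebra_simps)
    finally show "tapp m n A wv i = (s - rho0) * wv i ^ (m - 1)" .
  qed
  moreover have "\<exists>i<n. wv i \<noteq> 0" using wv_props(3) n1 by (intro exI[of _ 0]) auto
  ultimately have "wv \<in> vecs n \<and> (\<exists>i<n. wv i \<noteq> 0) \<and> (\<forall>i<n. tapp m n A wv i = (s - rho0) * wv i ^ (m - 1))"
    using wv_props(1) by (intro conjI)
  then show "H_eigenvalue m n A (s - rho0)"
    unfolding H_eigenvalue_def by (rule exI[of _ wv])
next
  fix mu assume "H_eigenvalue m n A mu"
  then obtain x where x: "x \<in> vecs n" "\<exists>i<n. x i \<noteq> 0" "\<forall>i<n. tapp m n A x i = mu * x i ^ (m - 1)"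
    unfolding H_eigenvalue_def by metis
  have xb: "\<forall>i<n. tapp m n B x i = (s - mu) * x i ^ (m - 1)"
  proof (intro allI impI)
    fix i assume i: "i < n"
    have "tapp m n A x i = s * x i ^ (m - 1) - tapp m n B x i" using tapp_A_real[OF i] .
    then have "tapp m n B x i = s * x i ^ (m - 1) - tapp m n A x i" by simp
    also have "\<dots> = s * x i ^ (m - 1) - mu * x i ^ (m - 1)" using x(3) i by simp
    also have "\<dots> = (s - mu) * x i ^ (m - 1)" by (simp add: algebra_simps)
    finally show "tapp m n B x i = (s - mu) * x i ^ (m - 1)" .
  qed
  have c1: "\<forall>i<n. tapp m n (\<lambda>is. complex_of_real (B is)) (\<lambda>i. complex_of_real (x i)) i
      = complex_of_real (s - mu) * complex_of_real (x i) ^ (m - 1)"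
    using xb by (simp add: tapp_of_real)
  have c2: "\<exists>i<n. complex_of_real (x i) \<noteq> 0" using x(2) by simp
  have "cmod (complex_of_real (s - mu)) \<le> rho0"
    by (rule eig_bound[OF wv_props(2) wv_props(4) c2 c1])
  then have "\<bar>s - mu\<bar> \<le> rho0" by (simp only: norm_of_real real_norm_def)
  then show "s - rho0 \<le> mu" by linarith
qed

end

lemma cplx_polar: "(y::complex) = complex_of_real (cmod y) * sgn y"
proof (cases "y = 0")
  case True then show ?thesis by simp
next
  case False
  have "sgn y = complex_of_real (inverse (cmod y)) * y" by (simp add: sgn_div_norm scaleR_conv_of_real)
  then have "complex_of_real (cmod y) * sgn y = complex_of_real (cmod y * inverse (cmod y)) * y"
    by (simp add: mult.assoc)
  also have "cmod y * inverse (cmod y) = 1" using False by simp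
  finally show ?thesis by simp
qed

lemma sgn_pos_mult: "0 < r \<Longrightarrow> sgn (complex_of_real r * u) = sgn u"
  by (simp add: sgn_mult sgn_of_real)

lemma prod_list_map_mult: "prod_list (map (\<lambda>k. f k * g k) xs) = prod_list (map f xs) * (prod_list (map g xs) :: complex)"
  by (induction xs) (simp_all add: mult_ac)

lemma D0_cond:
  assumes "p \<noteq> 0"
  shows "(complex_of_real a = inverse p * complex_of_real a * q) \<longleftrightarrow> (a = 0 \<or> q = p)"
proof (cases "a = 0")
  case True then show ?thesis by simp
next
  case False
  have e1: "inverse p * complex_of_real a * q = (complex_of_real a * q) / p"
    by (simp add: divide_inverse mult_ac)
  have "(complex_of_real a = inverse p * complex_of_real a * q) \<longleftrightarrow> complex_of_real a * p = complex_of_real a * q"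
    unfolding e1 using assms by (simp add: eq_divide_eq)
  also have "\<dots> \<longleftrightarrow> q = p" using False by auto
  finally show ?thesis using False by simp
qed

context ztensor
begin

lemma eigA_iff:
  "is_eigpair m n A (complex_of_real (s - rho0)) y \<longleftrightarrow>
     y \<in> vecs n \<and> (\<exists>i<n. y i \<noteq> 0) \<and>
     (\<forall>i<n. tapp m n (\<lambda>is. complex_of_real (B is)) y i = complex_of_real rho0 * y i ^ (m - 1))"
proof -
  have "tapp m n (\<lambda>is. complex_of_real (A is)) y i = complex_of_real (s - rho0) * y i ^ (m - 1) \<longleftrightarrow>
        tapp m n (\<lambda>is. complex_of_real (B is)) y i = complex_of_real rho0 * y i ^ (m - 1)" if i: "i < n" for i
  proof -
    have e: "tapp m n (\<lambda>is. complex_of_real (A is)) y i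
      = complex_of_real s * y i ^ (m - 1) - tapp m n (\<lambda>is. complex_of_real (B is)) y i"
      using tapp_A_cplx[OF i] .
    have e2: "complex_of_real (s - rho0) * y i ^ (m - 1) = complex_of_real s * y i ^ (m - 1) - complex_of_real rho0 * y i ^ (m - 1)"
      by (simp add: algebra_simps)
    show ?thesis unfolding e e2 by auto
  qed
  then show ?thesis unfolding is_eigpair_def by auto
qed

lemma D0_rel:
  assumes d: "d \<in> D0 m n A" and i: "i < n" and is_in: "is \<in> idx_lists (m - 1) n" and nz: "A (i # is) \<noteq> 0"
  shows "prod_list (map d is) = d i ^ (m - 1)"
proof -
  have "i # is \<in> idx_lists m n" using idx_cons'[OF i is_in] .
  then have "complex_of_real (A (i # is)) = inverse (d i ^ (m - 1)) * complex_of_real (A (i # is)) * prod_list (map d is)"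
    using d unfolding D0_def by auto
  moreover have "d i ^ (m - 1) \<noteq> 0" using d i unfolding D0_def by auto
  ultimately show ?thesis using D0_cond nz by blast
qed

lemma D0_relB:
  assumes d: "d \<in> D0 m n A" and i: "i < n" and is_in: "is \<in> idx_lists (m - 1) n" and nz: "B (i # is) \<noteq> 0"
  shows "prod_list (map d is) = d i ^ (m - 1)"
proof (cases "\<forall>j\<in>set is. j = i")
  case True
  then have "is = replicate (m - 1) i" using all_eq_replicate idx_len[OF is_in] by metis
  then show ?thesis by simp
next
  case False
  then obtain j where "j \<in> set is" "j \<noteq> i" by auto
  then have "ident_tensor (i # is) = 0" unfolding ident_tensor_def by auto
  then have "A (i # is) = - B (i # is)" using AsB idx_cons'[OF i is_in] by auto
  then have "A (i # is) \<noteq> 0" using nz by simp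
  then show ?thesis using D0_rel[OF d i is_in] by blast
qed

lemma D0_unit:
  assumes d: "d \<in> D0 m n A"
  shows "\<forall>i<n. cmod (d i) = 1"
proof -
  obtain i0 where i0: "i0 < n" "\<forall>j<n. cmod (d j) \<le> cmod (d i0)"
    using ex_argmax[OF n1, of "\<lambda>j. cmod (d j)"] by blast
  have d0: "d 0 = 1" using d unfolding D0_def by auto
  have c0: "1 \<le> cmod (d i0)" using i0(2) n1 d0 by (metis less_le_trans norm_one zero_less_one)
  define S where "S = {i. i < n \<and> cmod (d i) = cmod (d i0)}"
  have S1: "S \<subseteq> {0..<n}" unfolding S_def by auto
  have S2: "S \<noteq> {}" using i0(1) unfolding S_def by auto
  have "S = {0..<n}"
  proof (rule wi_closed[OF S1 S2])
    fix i j assume iS: "i \<in> S" and e: "(i, j) \<in> edges m n A"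
    obtain "is" where is_in: "is \<in> idx_lists (m - 1) n" and nz: "A (i # is) \<noteq> 0" and j: "j \<in> set is"
      and ij: "i < n" "j < n"
      using e unfolding edges_def by auto
    have "prod_list (map d is) = d i ^ (m - 1)" using D0_rel[OF d ij(1) is_in nz] .
    then have "prod_list (map (\<lambda>k. cmod (d k)) is) = cmod (d i) ^ (m - 1)"
      by (metis cmod_prod_list norm_power)
    also have "\<dots> = prod_list (map (\<lambda>k. cmod (d i0)) is)"
      using iS idx_len[OF is_in] unfolding S_def by (simp add: map_replicate_const)
    finally have eq: "prod_list (map (\<lambda>k. cmod (d k)) is) = prod_list (map (\<lambda>k. cmod (d i0)) is)" .
    have pre: "\<forall>k\<in>set is. 0 \<le> cmod (d k) \<and> cmod (d k) \<le> cmod (d i0) \<and> 0 < cmod (d i0)"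
      using i0(2) idx_set[OF is_in] c0 by auto
    have "cmod (d j) = cmod (d i0)"
      using prod_list_eq_imp_eq[OF pre eq j] by simp
    then show "j \<in> S" unfolding S_def using ij by auto
  qed
  then have allS: "i \<in> S" if "i < n" for i using that by simp
  have "cmod (d i0) = 1" using allS[of 0] n1 d0 unfolding S_def by simp
  show ?thesis
  proof (intro allI impI)
    fix i assume "i < n"
    then have "cmod (d i) = cmod (d i0)" using allS[of i] unfolding S_def by simp
    then show "cmod (d i) = 1" using \<open>cmod (d i0) = 1\<close> by simp
  qed
qed

lemma D0_eig:
  assumes d: "d \<in> D0 m n A"
  shows "is_eigpair m n A (complex_of_real (s - rho0)) (\<lambda>i. if i < n then d i * complex_of_real (wv i) else 0)"
  unfolding eigA_iff
proof (intro conjI)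
  show "(\<lambda>i. if i < n then d i * complex_of_real (wv i) else 0) \<in> vecs n" unfolding vecs_def by auto
  have "d 0 = 1" using d unfolding D0_def by auto
  then show "\<exists>i<n. (if i < n then d i * complex_of_real (wv i) else 0) \<noteq> 0"
    using n1 wv_props(3) by (intro exI[of _ 0]) auto
  show "\<forall>i<n. tapp m n (\<lambda>is. complex_of_real (B is)) (\<lambda>i. if i < n then d i * complex_of_real (wv i) else 0) i =
    complex_of_real rho0 * (if i < n then d i * complex_of_real (wv i) else 0) ^ (m - 1)"
  proof (intro allI impI)
    fix i assume i: "i < n"
    have "tapp m n (\<lambda>is. complex_of_real (B is)) (\<lambda>i. if i < n then d i * complex_of_real (wv i) else 0) i
        = tapp m n (\<lambda>is. complex_of_real (B is)) (\<lambda>i. d i * complex_of_real (wv i)) i"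
      by (rule tapp_cong) simp
    also have "\<dots> = d i ^ (m - 1) * tapp m n (\<lambda>is. complex_of_real (B is)) (\<lambda>i. complex_of_real (wv i)) i"
      unfolding tapp_def sum_distrib_left
    proof (rule sum.cong[OF refl])
      fix "is" assume is_in: "is \<in> idx_lists (m - 1) n"
      show "complex_of_real (B (i # is)) * prod_list (map (\<lambda>i. d i * complex_of_real (wv i)) is)
          = d i ^ (m - 1) * (complex_of_real (B (i # is)) * prod_list (map (\<lambda>i. complex_of_real (wv i)) is))"
      proof (cases "B (i # is) = 0")
        case True then show ?thesis by simp
      next
        case False
        then have "prod_list (map d is) = d i ^ (m - 1)" using D0_relB[OF d i is_in] by blast
        then show ?thesis by (simp add: prod_list_map_mult mult_ac)
      qed
    qed
    also have "\<dots> = d i ^ (m - 1) * complex_of_real (rho0 * wv i ^ (m - 1))"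
      using wv_props(4) i by (simp add: tapp_of_real)
    also have "\<dots> = complex_of_real rho0 * (if i < n then d i * complex_of_real (wv i) else 0) ^ (m - 1)"
      using i by (simp add: power_mult_distrib mult_ac)
    finally show "tapp m n (\<lambda>is. complex_of_real (B is)) (\<lambda>i. if i < n then d i * complex_of_real (wv i) else 0) i =
      complex_of_real rho0 * (if i < n then d i * complex_of_real (wv i) else 0) ^ (m - 1)" .
  qed
qed

end

lemma sgn_power_c: "sgn ((x::complex) ^ k) = sgn x ^ k"
  by (induction k) (simp_all add: sgn_mult)

context ztensor
begin

lemma eig_abs_gen:
  assumes y1: "\<exists>i<n. y i \<noteq> 0"
    and y2: "\<forall>i<n. tapp m n (\<lambda>is. complex_of_real (B is)) y i = complex_of_real rho0 * y i ^ (m - 1)"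
  shows "\<exists>t>0. \<forall>i<n. cmod (y i) = t * wv i"
proof -
  note w = wv_props
  obtain i0 where i0: "i0 < n" "\<forall>j<n. cmod (y j) / wv j \<le> cmod (y i0) / wv i0"
    using ex_argmax[OF n1, of "\<lambda>j. cmod (y j) / wv j"] by blast
  define t where "t = cmod (y i0) / wv i0"
  obtain i1 where i1: "i1 < n" "y i1 \<noteq> 0" using y1 by blast
  have "0 < cmod (y i1) / wv i1" using i1 w(2) by simp
  then have tpos: "0 < t" using i0(2) i1(1) unfolding t_def by (meson less_le_trans)
  have yle: "\<forall>j<n. 0 \<le> cmod (y j) \<and> cmod (y j) \<le> t * wv j"
  proof (intro allI impI conjI)
    fix j assume j: "j < n"
    show "0 \<le> cmod (y j)" by simp
    have "cmod (y j) / wv j \<le> t" using i0(2) j unfolding t_def by auto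
    then show "cmod (y j) \<le> t * wv j" using w(2) j by (simp add: pos_divide_le_eq)
  qed
  define S where "S = {i. i < n \<and> cmod (y i) = t * wv i}"
  have S1: "S \<subseteq> {0..<n}" unfolding S_def by auto
  have "0 < wv i0" using w(2) i0(1) by simp
  then have "cmod (y i0) = t * wv i0" unfolding t_def by simp
  then have S2: "S \<noteq> {}" using i0(1) unfolding S_def by auto
  have "S = {0..<n}"
  proof (rule wi_closed[OF S1 S2])
    fix i j assume iS: "i \<in> S" and e: "(i, j) \<in> edges m n A"
    have i: "i < n" and yi: "cmod (y i) = t * wv i" using iS unfolding S_def by auto
    obtain is0 where is0: "is0 \<in> idx_lists (m - 1) n" "B (i # is0) > 0" "j \<in> set is0" "j < n"
      using edge_B[OF e] by blast
    have "rho0 * cmod (y i) ^ (m - 1) = cmod (tapp m n (\<lambda>is. complex_of_real (B is)) y i)"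
      using y2 i rho0_nonneg by (simp add: norm_mult norm_power)
    also have "\<dots> \<le> tapp m n B (\<lambda>k. cmod (y k)) i" by (rule cmod_tapp_le[OF Bnn'[OF i]])
    finally have le1: "rho0 * cmod (y i) ^ (m - 1) \<le> tapp m n B (\<lambda>k. cmod (y k)) i" .
    have le2: "tapp m n B (\<lambda>k. cmod (y k)) i \<le> tapp m n B (\<lambda>k. t * wv k) i"
      by (rule tapp_mono[OF Bnn'[OF i]]) (use yle in auto)
    have "tapp m n B (\<lambda>k. t * wv k) i = t ^ (m - 1) * tapp m n B wv i" by (rule tapp_scale)
    also have "\<dots> = rho0 * cmod (y i) ^ (m - 1)" using w(4) i yi by (simp add: power_mult_distrib)
    finally have eq3: "tapp m n B (\<lambda>k. t * wv k) i = rho0 * cmod (y i) ^ (m - 1)" .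
    have eqs: "tapp m n B (\<lambda>k. cmod (y k)) i = tapp m n B (\<lambda>k. t * wv k) i"
      using le1 le2 eq3 by linarith
    have "B (i # is0) * prod_list (map (\<lambda>k. cmod (y k)) is0) = B (i # is0) * prod_list (map (\<lambda>k. t * wv k) is0)"
    proof (rule sum_mono_inv[OF eqs[unfolded tapp_def] _ is0(1) finite_idx])
      fix "is" assume is_in: "is \<in> idx_lists (m - 1) n"
      have "prod_list (map (\<lambda>k. cmod (y k)) is) \<le> prod_list (map (\<lambda>k. t * wv k) is)"
        using yle idx_set[OF is_in] by (intro prod_list_mono_nonneg) auto
      then show "B (i # is) * prod_list (map (\<lambda>k. cmod (y k)) is) \<le> B (i # is) * prod_list (map (\<lambda>k. t * wv k) is)"
        using Bnn'[OF i] is_in by (intro mult_left_mono) auto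
    qed
    then have eqp: "prod_list (map (\<lambda>k. cmod (y k)) is0) = prod_list (map (\<lambda>k. t * wv k) is0)"
      using is0(2) by simp
    have pre: "\<forall>k\<in>set is0. 0 \<le> cmod (y k) \<and> cmod (y k) \<le> t * wv k \<and> 0 < t * wv k"
      using yle idx_set[OF is0(1)] tpos w(2) by auto
    have "cmod (y j) = t * wv j" using prod_list_eq_imp_eq[OF pre eqp is0(3)] by simp
    then show "j \<in> S" unfolding S_def using is0(4) by simp
  qed
  then have allS: "i \<in> S" if "i < n" for i using that by simp
  have "\<forall>i<n. cmod (y i) = t * wv i"
  proof (intro allI impI)
    fix i assume "i < n"
    then show "cmod (y i) = t * wv i" using allS[of i] unfolding S_def by simp
  qed
  then show ?thesis using tpos by blast
qed

lemma eig_abs: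
  assumes y1: "\<exists>i<n. y i \<noteq> 0"
    and y2: "\<forall>i<n. tapp m n (\<lambda>is. complex_of_real (B is)) y i = complex_of_real rho0 * y i ^ (m - 1)"
    and y0: "y 0 = 1"
  shows "\<forall>i<n. cmod (y i) = wv i"
proof -
  obtain t where t: "t > 0" "\<forall>i<n. cmod (y i) = t * wv i" using eig_abs_gen[OF y1 y2] by blast
  have "cmod (y 0) = t * wv 0" using t n1 by simp
  then have t1: "t = 1" using y0 wv_props(3) by simp
  show ?thesis using t(2) t1 by simp
qed

lemma eig_phase:
  assumes y1: "\<exists>i<n. y i \<noteq> 0"
    and y2: "\<forall>i<n. tapp m n (\<lambda>is. complex_of_real (B is)) y i = complex_of_real rho0 * y i ^ (m - 1)"
    and y0: "y 0 = 1"
    and l: "l \<in> idx_lists m n"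
  shows "A l = 0 \<or> prod_list (map (\<lambda>i. sgn (y i)) (tl l)) = sgn (y (hd l)) ^ (m - 1)"
proof -
  note w = wv_props
  have ab: "\<forall>i<n. cmod (y i) = wv i" using eig_abs[OF y1 y2 y0] .
  have ynz: "y k \<noteq> 0" if "k < n" for k using ab w(2) that by force
  have "length l = m" using idx_len[OF l] .
  then obtain i is' where l_eq: "l = i # is'" using m2 by (cases l) auto
  have i: "i < n" using l l_eq unfolding idx_lists_def by auto
  have is'_in: "is' \<in> idx_lists (m - 1) n" using l l_eq unfolding idx_lists_def by auto
  show ?thesis
  proof (cases "A l = 0")
    case True then show ?thesis by simp
  next
    case Anz: False
    show ?thesis
    proof (cases "\<forall>j\<in>set is'. j = i")
      case True
      then have "is' = replicate (m - 1) i" using all_eq_replicate idx_len[OF is'_in] by metis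
      then show ?thesis using l_eq by simp
    next
      case False
      then obtain j where "j \<in> set is'" "j \<noteq> i" by auto
      then have "ident_tensor l = 0" unfolding ident_tensor_def l_eq by auto
      then have "A l = - B l" using AsB l by auto
      then have Bpos: "B (i # is') > 0" using Anz Bnn l l_eq by force
      define z where "z is = complex_of_real (B (i # is)) * prod_list (map y is)" for "is"
      have cz: "cmod (z is) = B (i # is) * prod_list (map (\<lambda>k. cmod (y k)) is)" if "is \<in> idx_lists (m - 1) n" for "is"
        using Bnn'[OF i] that unfolding z_def by (simp add: norm_mult cmod_prod_list)
      have sumz: "sum z (idx_lists (m - 1) n) = complex_of_real rho0 * y i ^ (m - 1)"
        using y2 i unfolding z_def tapp_def by simp
      have wvpos: "\<forall>k<n. 0 \<le> wv k" using w(2) by (auto simp: less_imp_le)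
      have "0 < B (i # is') * prod_list (map wv is')"
        using Bpos w(2) idx_set[OF is'_in] by (intro mult_pos_pos prod_list_pos_real) auto
      also have "\<dots> \<le> tapp m n B wv i" by (rule term_le_tapp[OF Bnn'[OF i] wvpos is'_in])
      also have "\<dots> = rho0 * wv i ^ (m - 1)" using w(4) i by simp
      finally have "0 < rho0 * wv i ^ (m - 1)" .
      moreover have "0 < wv i ^ (m - 1)" using w(2) i by simp
      ultimately have rpos: "0 < rho0" by (rule zero_less_mult_pos2)
      have "tapp m n B (\<lambda>k. cmod (y k)) i = tapp m n B wv i" by (rule tapp_cong) (use ab in simp)
      then have "(\<Sum>is\<in>idx_lists (m - 1) n. cmod (z is)) = tapp m n B wv i"
        unfolding tapp_def using cz by (simp cong: sum.cong)
      also have "\<dots> = rho0 * wv i ^ (m - 1)" using w(4) i by simp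
      also have "\<dots> = cmod (sum z (idx_lists (m - 1) n))"
        unfolding sumz using ab i rpos by (simp add: norm_mult norm_power)
      finally have teq: "cmod (sum z (idx_lists (m - 1) n)) = (\<Sum>is\<in>idx_lists (m - 1) n. cmod (z is))" by simp
      have zph: "z is' = complex_of_real (cmod (z is')) * sgn (sum z (idx_lists (m - 1) n))"
        by (rule triangle_eq_phase[OF finite_idx teq is'_in])
      have "0 < prod_list (map (\<lambda>k. cmod (y k)) is')"
        using ynz idx_set[OF is'_in] by (intro prod_list_pos_real) auto
      then have czpos: "0 < cmod (z is')" using cz[OF is'_in] Bpos by simp
      have "sgn (z is') = sgn (sum z (idx_lists (m - 1) n))"
      proof -
        have "sgn (z is') = sgn (complex_of_real (cmod (z is')) * sgn (sum z (idx_lists (m - 1) n)))"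
          using zph by metis
        also have "\<dots> = sgn (sgn (sum z (idx_lists (m - 1) n)))" using sgn_pos_mult[OF czpos] by simp
        also have "\<dots> = sgn (sum z (idx_lists (m - 1) n))" by simp
        finally show ?thesis .
      qed
      also have "\<dots> = sgn (y i) ^ (m - 1)" unfolding sumz using sgn_pos_mult[OF rpos] by (simp add: sgn_power_c)
      finally have s1: "sgn (z is') = sgn (y i) ^ (m - 1)" .
      have "sgn (z is') = prod_list (map (\<lambda>k. sgn (y k)) is')"
        unfolding z_def using sgn_pos_mult[OF Bpos] by (simp add: sgn_prod_list)
      then show ?thesis using s1 l_eq by simp
    qed
  qed
qed

definition dv :: "(nat \<Rightarrow> complex) \<Rightarrow> nat \<Rightarrow> complex" where
  "dv y = (\<lambda>i. if i < n then sgn (y i) else 1)"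

lemma dv_D0:
  assumes y1: "\<exists>i<n. y i \<noteq> 0"
    and y2: "\<forall>i<n. tapp m n (\<lambda>is. complex_of_real (B is)) y i = complex_of_real rho0 * y i ^ (m - 1)"
    and y0: "y 0 = 1"
  shows "dv y \<in> D0 m n A"
proof -
  have ab: "\<forall>i<n. cmod (y i) = wv i" using eig_abs[OF y1 y2 y0] .
  have ynz: "y k \<noteq> 0" if "k < n" for k using ab wv_props(2) that by force
  have nz: "\<forall>i<n. dv y i \<noteq> 0" using ynz unfolding dv_def by (auto simp: sgn_zero_iff)
  have one: "\<forall>i\<ge>n. dv y i = 1" unfolding dv_def by simp
  have d0: "dv y 0 = 1" unfolding dv_def using y0 n1 by simp
  have cond: "complex_of_real (A l) = inverse (dv y (hd l) ^ (m - 1)) * complex_of_real (A l) * prod_list (map (dv y) (tl l))"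
    if l: "l \<in> idx_lists m n" for l
  proof -
    have "length l = m" using idx_len[OF l] .
    then have lne: "l \<noteq> []" using m2 by auto
    have hd: "hd l < n" using l hd_in_set[OF lne] unfolding idx_lists_def by auto
    have stl: "set (tl l) \<subseteq> set l" by (cases l) auto
    have "map (dv y) (tl l) = map (\<lambda>i. sgn (y i)) (tl l)"
    proof (rule map_cong[OF refl])
      fix x assume "x \<in> set (tl l)"
      then have "x < n" using stl l unfolding idx_lists_def by auto
      then show "dv y x = sgn (y x)" unfolding dv_def by simp
    qed
    note mp = this
    have dh: "dv y (hd l) = sgn (y (hd l))" using hd unfolding dv_def by simp
    have pnz: "dv y (hd l) ^ (m - 1) \<noteq> 0" using nz hd by simp
    have ph: "A l = 0 \<or> prod_list (map (dv y) (tl l)) = dv y (hd l) ^ (m - 1)"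
      unfolding mp dh using eig_phase[OF y1 y2 y0 l] .
    show ?thesis by (subst D0_cond[OF pnz]) (rule ph)
  qed
  show ?thesis unfolding D0_def using nz one d0 cond by blast
qed

lemma eig_repr:
  assumes yv: "y \<in> vecs n" and y1: "\<exists>i<n. y i \<noteq> 0"
    and y2: "\<forall>i<n. tapp m n (\<lambda>is. complex_of_real (B is)) y i = complex_of_real rho0 * y i ^ (m - 1)"
    and y0: "y 0 = 1"
  shows "y = (\<lambda>i. if i < n then dv y i * complex_of_real (wv i) else 0)"
proof
  fix i
  show "y i = (if i < n then dv y i * complex_of_real (wv i) else 0)"
  proof (cases "i < n")
    case True
    have "y i = complex_of_real (cmod (y i)) * sgn (y i)" by (rule cplx_polar)
    also have "\<dots> = complex_of_real (wv i) * sgn (y i)" using eig_abs[OF y1 y2 y0] True by simp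
    finally show ?thesis using True unfolding dv_def by (simp add: mult.commute)
  next
    case False then show ?thesis using yv unfolding vecs_def by simp
  qed
qed

end

lemma exp_prod_list:
  "prod_list (map (\<lambda>k. exp (\<i> * complex_of_real (f k))) xs) = exp (\<i> * complex_of_real (sum_list (map f xs)))"
proof (induction xs)
  case Nil then show ?case by simp
next
  case (Cons a xs)
  have "exp (\<i> * complex_of_real (f a)) * exp (\<i> * complex_of_real (sum_list (map f xs)))
      = exp (\<i> * complex_of_real (f a) + \<i> * complex_of_real (sum_list (map f xs)))"
    by (simp add: exp_add)
  also have "\<i> * complex_of_real (f a) + \<i> * complex_of_real (sum_list (map f xs))
      = \<i> * complex_of_real (sum_list (map f (a # xs)))" by (simp add: algebra_simps)
  finally show ?case using Cons by simp
qed

lemma exp_pow_i: "exp (\<i> * complex_of_real a) ^ k = exp (\<i> * complex_of_real (real k * a))"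
proof -
  have "exp (\<i> * complex_of_real a) ^ k = exp (of_nat k * (\<i> * complex_of_real a))"
    by (simp add: exp_of_nat_mult)
  also have "of_nat k * (\<i> * complex_of_real a) = \<i> * complex_of_real (real k * a)" by simp
  finally show ?thesis .
qed

lemma exp_i_eq_imp:
  assumes "exp (\<i> * complex_of_real a) = exp (\<i> * complex_of_real b)"
  shows "\<exists>k::int. a = b + 2 * pi * real_of_int k"
proof -
  obtain k where k: "\<i> * complex_of_real a = \<i> * complex_of_real b + complex_of_real (real_of_int (2 * k) * pi) * \<i>"
    using assms exp_eq by blast
  have "Im (\<i> * complex_of_real a) = Im (\<i> * complex_of_real b + complex_of_real (real_of_int (2 * k) * pi) * \<i>)"
    using k by simp
  then have "a = b + 2 * pi * real_of_int k" by simp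
  then show ?thesis by blast
qed

lemma floor_eq_close: "\<lfloor>x::real\<rfloor> = \<lfloor>y\<rfloor> \<Longrightarrow> \<bar>x - y\<bar> < 1"
  using floor_correct[of x] floor_correct[of y] by linarith

lemma sum_list_abs_bound:
  fixes f :: "nat \<Rightarrow> real"
  assumes "\<forall>k\<in>set xs. \<bar>f k\<bar> \<le> c"
  shows "\<bar>sum_list (map f xs)\<bar> \<le> real (length xs) * c"
  using assms
proof (induction xs)
  case Nil then show ?case by simp
next
  case (Cons a xs)
  then have "\<bar>sum_list (map f xs)\<bar> \<le> real (length xs) * c" "\<bar>f a\<bar> \<le> c" by auto
  then show ?case by (simp add: algebra_simps)
qed

context ztensor
begin

lemma D0_exp: "d \<in> D0 m n A \<Longrightarrow> i < n \<Longrightarrow> exp (\<i> * complex_of_real (Arg (d i))) = d i"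
  using D0_unit complex_norm_eq_1_exp_eq by blast

lemma D0_arg_rel:
  assumes d: "d \<in> D0 m n A" and i: "i < n" and is_in: "is \<in> idx_lists (m - 1) n" and nz: "A (i # is) \<noteq> 0"
  shows "\<exists>k::int. real (m - 1) * Arg (d i) = sum_list (map (\<lambda>j. Arg (d j)) is) + 2 * pi * real_of_int k"
proof -
  have mp: "map d is = map (\<lambda>j. exp (\<i> * complex_of_real (Arg (d j)))) is"
    using D0_exp[OF d] idx_set[OF is_in] by auto
  have "prod_list (map d is) = prod_list (map (\<lambda>j. exp (\<i> * complex_of_real (Arg (d j)))) is)"
    by (simp only: mp)
  then have "prod_list (map d is) = exp (\<i> * complex_of_real (sum_list (map (\<lambda>j. Arg (d j)) is)))"
    by (simp only: exp_prod_list)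
  moreover have "d i ^ (m - 1) = exp (\<i> * complex_of_real (real (m - 1) * Arg (d i)))"
    using D0_exp[OF d i] exp_pow_i by metis
  ultimately have "exp (\<i> * complex_of_real (real (m - 1) * Arg (d i))) = exp (\<i> * complex_of_real (sum_list (map (\<lambda>j. Arg (d j)) is)))"
    using D0_rel[OF d i is_in nz] by simp
  then show ?thesis by (rule exp_i_eq_imp)
qed

definition keyv :: "(nat \<Rightarrow> complex) \<Rightarrow> nat \<Rightarrow> int" where
  "keyv d = (\<lambda>j. if j < n then \<lfloor>real m * Arg (d j) / pi\<rfloor> else 0)"

lemma keyv_inj:
  assumes d: "d \<in> D0 m n A" and e: "e \<in> D0 m n A" and k: "keyv d = keyv e"
  shows "d = e"
proof -
  define th where "th j = Arg (d j) - Arg (e j)" for j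
  have mpos: "0 < real m" using m2 by simp
  have thb: "\<bar>th j\<bar> < pi / real m" if j: "j < n" for j
  proof -
    have "\<lfloor>real m * Arg (d j) / pi\<rfloor> = \<lfloor>real m * Arg (e j) / pi\<rfloor>"
      using fun_cong[OF k, of j] j unfolding keyv_def by simp
    then have "\<bar>real m * Arg (d j) / pi - real m * Arg (e j) / pi\<bar> < 1" by (rule floor_eq_close)
    then have "\<bar>real m * th j / pi\<bar> < 1" unfolding th_def by (simp add: algebra_simps diff_divide_distrib)
    then have "real m * \<bar>th j\<bar> / pi < 1" by (simp add: abs_mult abs_divide)
    then have "real m * \<bar>th j\<bar> < pi" by (simp add: pos_divide_less_eq)
    then show ?thesis using mpos by (simp add: pos_less_divide_eq mult.commute)
  qed
  have rel: "real (m - 1) * th i = sum_list (map th is)"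
    if i: "i < n" and is_in: "is \<in> idx_lists (m - 1) n" and nz: "A (i # is) \<noteq> 0" for i "is"
  proof -
    obtain k1 :: int where k1: "real (m - 1) * Arg (d i) = sum_list (map (\<lambda>j. Arg (d j)) is) + 2 * pi * real_of_int k1"
      using D0_arg_rel[OF d i is_in nz] by blast
    obtain k2 :: int where k2: "real (m - 1) * Arg (e i) = sum_list (map (\<lambda>j. Arg (e j)) is) + 2 * pi * real_of_int k2"
      using D0_arg_rel[OF e i is_in nz] by blast
    have sl: "sum_list (map th is) = sum_list (map (\<lambda>j. Arg (d j)) is) - sum_list (map (\<lambda>j. Arg (e j)) is)"
      unfolding th_def by (induction "is") auto
    have eq: "real (m - 1) * th i - sum_list (map th is) = 2 * pi * real_of_int (k1 - k2)"
      unfolding sl th_def using k1 k2 by (simp add: algebra_simps)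
    have pos1: "0 < real (m - 1)" using m2 by simp
    have ab: "\<bar>real (m - 1)\<bar> = real (m - 1)" by simp
    have b1: "\<bar>real (m - 1) * th i\<bar> < real (m - 1) * (pi / real m)"
      unfolding abs_mult ab using mult_strict_left_mono[OF thb[OF i] pos1] .
    have b2: "\<bar>sum_list (map th is)\<bar> \<le> real (m - 1) * (pi / real m)"
      using sum_list_abs_bound[of "is" th "pi / real m"] thb idx_set[OF is_in] idx_len[OF is_in]
      by (auto intro: less_imp_le)
    have "real (m - 1) * (pi / real m) \<le> pi"
      using mpos m2 by (simp add: field_simps)
    then have "\<bar>2 * pi * real_of_int (k1 - k2)\<bar> < 2 * pi" using eq b1 b2 by linarith
    then have "\<bar>real_of_int (k1 - k2)\<bar> < 1" using pi_gt_zero by (simp add: abs_mult)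
    then have "k1 - k2 = 0" by linarith
    then show ?thesis using eq by simp
  qed
  obtain i0 where i0: "i0 < n" "\<forall>j<n. th j \<le> th i0" using ex_argmax[OF n1, of th] by blast
  define S where "S = {i. i < n \<and> th i = th i0}"
  have S1: "S \<subseteq> {0..<n}" unfolding S_def by auto
  have S2: "S \<noteq> {}" using i0(1) unfolding S_def by auto
  have "S = {0..<n}"
  proof (rule wi_closed[OF S1 S2])
    fix i j assume iS: "i \<in> S" and ed: "(i, j) \<in> edges m n A"
    obtain "is" where is_in: "is \<in> idx_lists (m - 1) n" and nz: "A (i # is) \<noteq> 0" and j: "j \<in> set is"
      and ij: "i < n" "j < n"
      using ed unfolding edges_def by auto
    have thi: "th i = th i0" using iS unfolding S_def by simp
    have "sum_list (map th is) = real (length is) * th i0"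
      using rel[OF ij(1) is_in nz] thi idx_len[OF is_in] by simp
    then have "th j = th i0" using sum_list_eq_max[of "is" th "th i0" j] i0(2) idx_set[OF is_in] j by auto
    then show "j \<in> S" unfolding S_def using ij by simp
  qed
  then have allS: "i \<in> S" if "i < n" for i using that by simp
  have "d 0 = 1" "e 0 = 1" using d e unfolding D0_def by auto
  then have "th 0 = 0" unfolding th_def by simp
  then have "th i0 = 0" using allS[of 0] n1 unfolding S_def by simp
  show ?thesis
  proof
    fix j
    show "d j = e j"
    proof (cases "j < n")
      case True
      then have "th j = 0" using allS[of j] \<open>th i0 = 0\<close> unfolding S_def by simp
      then have "Arg (d j) = Arg (e j)" unfolding th_def by simp
      then show ?thesis using D0_exp[OF d True] D0_exp[OF e True] by metis
    next
      case False
      then show ?thesis using d e unfolding D0_def by auto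
    qed
  qed
qed

lemma D0_finite: "finite (D0 m n A)"
proof -
  have "keyv ` D0 m n A \<subseteq> {f. \<forall>x. (x \<in> {0..<n} \<longrightarrow> f x \<in> {- int m..int m}) \<and> (x \<notin> {0..<n} \<longrightarrow> f x = 0)}"
  proof
    fix f assume "f \<in> keyv ` D0 m n A"
    then obtain d where f: "f = keyv d" by auto
    have "- int m \<le> \<lfloor>real m * Arg (d x) / pi\<rfloor> \<and> \<lfloor>real m * Arg (d x) / pi\<rfloor> \<le> int m" for x
    proof -
      have a: "- pi < Arg (d x)" "Arg (d x) \<le> pi" using Arg_bounded by auto
      have m0: "0 \<le> real m" by simp
      have "real m * Arg (d x) \<le> real m * pi" using a(2) m0 by (rule mult_left_mono)
      then have u: "real m * Arg (d x) / pi \<le> real m" using pi_gt_zero by (simp add: pos_divide_le_eq)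
      have "real m * (- pi) \<le> real m * Arg (d x)" using a(1) m0 by (intro mult_left_mono) auto
      then have l: "- real m \<le> real m * Arg (d x) / pi" using pi_gt_zero by (simp add: pos_le_divide_eq)
      show ?thesis using u l by linarith
    qed
    then show "f \<in> {f. \<forall>x. (x \<in> {0..<n} \<longrightarrow> f x \<in> {- int m..int m}) \<and> (x \<notin> {0..<n} \<longrightarrow> f x = 0)}"
      unfolding f keyv_def by auto
  qed
  moreover have "finite {f. \<forall>x. (x \<in> {0..<n} \<longrightarrow> f x \<in> {- int m..int m}) \<and> (x \<notin> {0..<n} \<longrightarrow> f x = (0::int))}"
    by (rule finite_set_of_finite_funs) auto
  ultimately have "finite (keyv ` D0 m n A)" by (rule finite_subset)
  moreover have "inj_on keyv (D0 m n A)" using keyv_inj by (auto intro: inj_onI)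
  ultimately show ?thesis using finite_imageD by blast
qed

end

lemma pclass_scale:
  assumes "c \<noteq> 0"
  shows "pclass (\<lambda>i. c * x i) = pclass x"
proof
  show "pclass (\<lambda>i. c * x i) \<subseteq> pclass x"
  proof
    fix z assume "z \<in> pclass (\<lambda>i. c * x i)"
    then obtain c' where z: "z = (\<lambda>i. c' * (c * x i))" "c' \<noteq> 0" unfolding pclass_def by blast
    then have "z = (\<lambda>i. (c' * c) * x i)" by (simp add: mult.assoc)
    moreover have "c' * c \<noteq> 0" using z(2) assms by simp
    ultimately show "z \<in> pclass x" unfolding pclass_def by blast
  qed
  show "pclass x \<subseteq> pclass (\<lambda>i. c * x i)"
  proof
    fix z assume "z \<in> pclass x"
    then obtain c' where z: "z = (\<lambda>i. c' * x i)" "c' \<noteq> 0" unfolding pclass_def by blast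
    then have "z = (\<lambda>i. (c' / c) * (c * x i))" using assms by (simp add: field_simps)
    moreover have "c' / c \<noteq> 0" using z(2) assms by simp
    ultimately show "z \<in> pclass (\<lambda>i. c * x i)" unfolding pclass_def by blast
  qed
qed

lemma prep_pclass:
  assumes "x 0 = 1"
  shows "prep (pclass x) = x"
  unfolding prep_def
proof (rule some_equality)
  show "x \<in> pclass x \<and> x 0 = 1" using assms unfolding pclass_def by (auto intro!: exI[of _ 1])
  fix y assume "y \<in> pclass x \<and> y 0 = 1"
  then obtain c where y: "y = (\<lambda>i. c * x i)" "y 0 = 1" unfolding pclass_def by blast
  then have "c = 1" using assms by simp
  then show "y = x" using y by simp
qed

lemma tapp_scale_c:
  "tapp m n (\<lambda>is. complex_of_real (A is)) (\<lambda>i. c * x i) j = c ^ (m - 1) * tapp m n (\<lambda>is. complex_of_real (A is)) x j"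
  by (rule tapp_scale)

context ztensor
begin

abbreviation "lamc \<equiv> complex_of_real (s - rho0)"

lemma PV_eq: "PV m n A (complex_of_real (lambda_min m n A)) = PV m n A lamc"
  using lambda_min_eq by simp

definition Phi :: "(nat \<Rightarrow> complex) \<Rightarrow> (nat \<Rightarrow> complex) set" where
  "Phi d = pclass (\<lambda>i. if i < n then d i * complex_of_real (wv i) else 0)"

definition Psi :: "(nat \<Rightarrow> complex) set \<Rightarrow> nat \<Rightarrow> complex" where
  "Psi P = dv (prep P)"

lemma D0_char:
  "d \<in> D0 m n A \<longleftrightarrow> (\<forall>i<n. d i \<noteq> 0) \<and> (\<forall>i\<ge>n. d i = 1) \<and> d 0 = 1 \<and>
     (\<forall>l\<in>idx_lists m n. A l = 0 \<or> prod_list (map d (tl l)) = d (hd l) ^ (m - 1))"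
proof -
  have hd: "hd l < n" if "l \<in> idx_lists m n" for l
  proof -
    have "length l = m" using idx_len[OF that] .
    then have lne: "l \<noteq> []" using m2 by auto
    have hs: "hd l \<in> set l" using hd_in_set[OF lne] .
    have "set l \<subseteq> {0..<n}" using that unfolding idx_lists_def by simp
    then have "hd l \<in> {0..<n}" using hs by (rule subsetD)
    then show ?thesis by simp
  qed
  show ?thesis
  proof
    assume d: "d \<in> D0 m n A"
    then have nz: "\<forall>i<n. d i \<noteq> 0" unfolding D0_def by auto
    have "\<forall>l\<in>idx_lists m n. A l = 0 \<or> prod_list (map d (tl l)) = d (hd l) ^ (m - 1)"
    proof
      fix l assume l: "l \<in> idx_lists m n"
      have pnz: "d (hd l) ^ (m - 1) \<noteq> 0" using nz hd[OF l] by simp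
      have "complex_of_real (A l) = inverse (d (hd l) ^ (m - 1)) * complex_of_real (A l) * prod_list (map d (tl l))"
        using d l unfolding D0_def by auto
      then show "A l = 0 \<or> prod_list (map d (tl l)) = d (hd l) ^ (m - 1)" using D0_cond[OF pnz] by blast
    qed
    then show "(\<forall>i<n. d i \<noteq> 0) \<and> (\<forall>i\<ge>n. d i = 1) \<and> d 0 = 1 \<and>
     (\<forall>l\<in>idx_lists m n. A l = 0 \<or> prod_list (map d (tl l)) = d (hd l) ^ (m - 1))"
      using d unfolding D0_def by auto
  next
    assume a: "(\<forall>i<n. d i \<noteq> 0) \<and> (\<forall>i\<ge>n. d i = 1) \<and> d 0 = 1 \<and>
     (\<forall>l\<in>idx_lists m n. A l = 0 \<or> prod_list (map d (tl l)) = d (hd l) ^ (m - 1))"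
    have "complex_of_real (A l) = inverse (d (hd l) ^ (m - 1)) * complex_of_real (A l) * prod_list (map d (tl l))"
      if l: "l \<in> idx_lists m n" for l
    proof -
      have pnz: "d (hd l) ^ (m - 1) \<noteq> 0" using a hd[OF l] by simp
      show ?thesis by (subst D0_cond[OF pnz]) (use a l in blast)
    qed
    then show "d \<in> D0 m n A" unfolding D0_def using a by blast
  qed
qed

lemma prod_list_ones: "prod_list (map (\<lambda>_. 1::complex) xs) = 1"
  by (induction xs) auto

lemma D0_one: "(\<lambda>_. 1) \<in> D0 m n A"
  unfolding D0_char by (simp add: prod_list_ones)

lemma D0_mult: "d \<in> D0 m n A \<Longrightarrow> e \<in> D0 m n A \<Longrightarrow> (\<lambda>i. d i * e i) \<in> D0 m n A"
  unfolding D0_char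
proof (elim conjE, intro conjI)
  assume d: "\<forall>i<n. d i \<noteq> 0" "\<forall>i\<ge>n. d i = 1" "d 0 = 1"
      "\<forall>l\<in>idx_lists m n. A l = 0 \<or> prod_list (map d (tl l)) = d (hd l) ^ (m - 1)"
    and e: "\<forall>i<n. e i \<noteq> 0" "\<forall>i\<ge>n. e i = 1" "e 0 = 1"
      "\<forall>l\<in>idx_lists m n. A l = 0 \<or> prod_list (map e (tl l)) = e (hd l) ^ (m - 1)"
  show "\<forall>i<n. d i * e i \<noteq> 0" using d e by simp
  show "\<forall>i\<ge>n. d i * e i = 1" using d e by simp
  show "d 0 * e 0 = 1" using d e by simp
  show "\<forall>l\<in>idx_lists m n. A l = 0 \<or> prod_list (map (\<lambda>i. d i * e i) (tl l)) = (d (hd l) * e (hd l)) ^ (m - 1)"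
  proof
    fix l assume l: "l \<in> idx_lists m n"
    show "A l = 0 \<or> prod_list (map (\<lambda>i. d i * e i) (tl l)) = (d (hd l) * e (hd l)) ^ (m - 1)"
    proof (cases "A l = 0")
      case True then show ?thesis by simp
    next
      case False
      then have "prod_list (map d (tl l)) = d (hd l) ^ (m - 1)" "prod_list (map e (tl l)) = e (hd l) ^ (m - 1)"
        using d(4) e(4) l by auto
      then show ?thesis by (simp add: prod_list_map_mult power_mult_distrib)
    qed
  qed
qed

lemma prod_list_inverse: "prod_list (map (\<lambda>i. inverse (d i)) xs) = inverse (prod_list (map d xs) :: complex)"
  by (induction xs) (simp_all add: inverse_mult_distrib mult.commute)

lemma D0_inv: "d \<in> D0 m n A \<Longrightarrow> (\<lambda>i. inverse (d i)) \<in> D0 m n A"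
  unfolding D0_char
proof (elim conjE, intro conjI)
  assume d: "\<forall>i<n. d i \<noteq> 0" "\<forall>i\<ge>n. d i = 1" "d 0 = 1"
      "\<forall>l\<in>idx_lists m n. A l = 0 \<or> prod_list (map d (tl l)) = d (hd l) ^ (m - 1)"
  show "\<forall>i<n. inverse (d i) \<noteq> 0" using d by simp
  show "\<forall>i\<ge>n. inverse (d i) = 1" using d by simp
  show "inverse (d 0) = 1" using d by simp
  show "\<forall>l\<in>idx_lists m n. A l = 0 \<or> prod_list (map (\<lambda>i. inverse (d i)) (tl l)) = inverse (d (hd l)) ^ (m - 1)"
  proof
    fix l assume l: "l \<in> idx_lists m n"
    show "A l = 0 \<or> prod_list (map (\<lambda>i. inverse (d i)) (tl l)) = inverse (d (hd l)) ^ (m - 1)"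
    proof (cases "A l = 0")
      case True then show ?thesis by simp
    next
      case False
      then have "prod_list (map d (tl l)) = d (hd l) ^ (m - 1)" using d(4) l by auto
      then show ?thesis by (simp add: prod_list_inverse power_inverse)
    qed
  qed
qed

lemma D0_nz_all: "d \<in> D0 m n A \<Longrightarrow> d i \<noteq> 0"
  unfolding D0_def by (cases "i < n") auto

lemma eig_scale:
  assumes "is_eigpair m n A lamc y" "c \<noteq> 0"
  shows "is_eigpair m n A lamc (\<lambda>i. c * y i)"
  using assms unfolding is_eigpair_def
proof (intro conjI)
  show "(\<lambda>i. c * y i) \<in> vecs n" using assms unfolding is_eigpair_def vecs_def by auto
  show "\<exists>i<n. c * y i \<noteq> 0" using assms unfolding is_eigpair_def by auto
  show "\<forall>i<n. tapp m n (\<lambda>is. complex_of_real (A is)) (\<lambda>i. c * y i) i = lamc * (c * y i) ^ (m - 1)"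
    using assms unfolding is_eigpair_def by (simp add: tapp_scale_c power_mult_distrib mult_ac)
qed

lemma Phi_in: "d \<in> D0 m n A \<Longrightarrow> Phi d \<in> PV m n A lamc"
  unfolding Phi_def PV_def using D0_eig by blast

lemma Psi_Phi: "d \<in> D0 m n A \<Longrightarrow> Psi (Phi d) = d"
proof -
  assume d: "d \<in> D0 m n A"
  have d0: "d 0 = 1" using d unfolding D0_def by auto
  have "(\<lambda>i. if i < n then d i * complex_of_real (wv i) else 0) 0 = 1"
    using d0 wv_props(3) n1 by simp
  then have "prep (Phi d) = (\<lambda>i. if i < n then d i * complex_of_real (wv i) else 0)"
    unfolding Phi_def by (rule prep_pclass)
  then have "Psi (Phi d) = dv (\<lambda>i. if i < n then d i * complex_of_real (wv i) else 0)"
    unfolding Psi_def by simp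
  also have "\<dots> = d"
  proof
    fix i show "dv (\<lambda>i. if i < n then d i * complex_of_real (wv i) else 0) i = d i"
    proof (cases "i < n")
      case True
      have "sgn (d i * complex_of_real (wv i)) = sgn (d i)"
        using sgn_pos_mult[of "wv i" "d i"] wv_props(2) True by (simp add: mult.commute)
      also have "\<dots> = d i" using D0_unit[OF d] True by (simp add: sgn_div_norm)
      finally show ?thesis unfolding dv_def using True by simp
    next
      case False then show ?thesis unfolding dv_def using d unfolding D0_def by auto
    qed
  qed
  finally show ?thesis .
qed

lemma PV_elem:
  assumes P: "P \<in> PV m n A lamc"
  shows "Psi P \<in> D0 m n A \<and> Phi (Psi P) = P"
proof -
  obtain y where y: "is_eigpair m n A lamc y" and Py: "P = pclass y" using P unfolding PV_def by blast
  have yB: "y \<in> vecs n" "\<exists>i<n. y i \<noteq> 0"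
    "\<forall>i<n. tapp m n (\<lambda>is. complex_of_real (B is)) y i = complex_of_real rho0 * y i ^ (m - 1)"
    using y unfolding eigA_iff by auto
  obtain t where t: "t > 0" "\<forall>i<n. cmod (y i) = t * wv i" using eig_abs_gen[OF yB(2) yB(3)] by blast
  have "cmod (y 0) = t * wv 0" using t n1 by simp
  then have y0: "y 0 \<noteq> 0" using t(1) wv_props(3) by auto
  define z where "z = (\<lambda>i. inverse (y 0) * y i)"
  have zE: "is_eigpair m n A lamc z" unfolding z_def using eig_scale[OF y] y0 by simp
  have z0: "z 0 = 1" unfolding z_def using y0 by simp
  have Pz: "P = pclass z" unfolding Py z_def using pclass_scale[of "inverse (y 0)" y] y0 by simp
  have prepP: "prep P = z" unfolding Pz using z0 by (rule prep_pclass)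
  have zB: "z \<in> vecs n" "\<exists>i<n. z i \<noteq> 0"
    "\<forall>i<n. tapp m n (\<lambda>is. complex_of_real (B is)) z i = complex_of_real rho0 * z i ^ (m - 1)"
    using zE unfolding eigA_iff by auto
  have "Psi P = dv z" unfolding Psi_def prepP ..
  moreover have "dv z \<in> D0 m n A" using dv_D0[OF zB(2) zB(3) z0] .
  moreover have "Phi (dv z) = P"
    unfolding Phi_def Pz using eig_repr[OF zB(1) zB(2) zB(3) z0] by simp
  ultimately show ?thesis by simp
qed

lemma bij_Psi: "bij_betw Psi (PV m n A lamc) (D0 m n A)"
proof (rule bij_betw_byWitness[of _ Phi])
  show "\<forall>P\<in>PV m n A lamc. Phi (Psi P) = P" using PV_elem by blast
  show "\<forall>d\<in>D0 m n A. Psi (Phi d) = d" using Psi_Phi by blast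
  show "Psi ` PV m n A lamc \<subseteq> D0 m n A" using PV_elem by blast
  show "Phi ` D0 m n A \<subseteq> PV m n A lamc" using Phi_in by blast
qed

lemma qh_eq: "qhprod n wv P Q = Phi (\<lambda>i. Psi P i * Psi Q i)"
  unfolding qhprod_def Phi_def Psi_def dv_def by (simp add: if_distrib cong: if_cong)

lemma one_eq: "pclass (\<lambda>i. complex_of_real (wv i)) = Phi (\<lambda>_. 1)"
proof -
  have "(\<lambda>i. complex_of_real (wv i)) = (\<lambda>i. if i < n then 1 * complex_of_real (wv i) else 0)"
    using wv_props(1) unfolding vecs_def by auto
  then show ?thesis unfolding Phi_def by simp
qed

lemma PVg: "PV_group m n A B = \<lparr>carrier = PV m n A lamc, monoid.mult = qhprod n wv, one = Phi (\<lambda>_. 1)\<rparr>"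
  unfolding PV_group_def PV_eq wv_def[symmetric] one_eq ..

lemma comm_D0: "comm_group (D0_group m n A)"
proof (rule comm_groupI)
  show "\<And>x y. x \<in> carrier (D0_group m n A) \<Longrightarrow> y \<in> carrier (D0_group m n A) \<Longrightarrow>
      x \<otimes>\<^bsub>D0_group m n A\<^esub> y \<in> carrier (D0_group m n A)"
    unfolding D0_group_def using D0_mult by simp
  show "\<one>\<^bsub>D0_group m n A\<^esub> \<in> carrier (D0_group m n A)" unfolding D0_group_def using D0_one by simp
  show "\<And>x y z. x \<in> carrier (D0_group m n A) \<Longrightarrow> y \<in> carrier (D0_group m n A) \<Longrightarrow> z \<in> carrier (D0_group m n A) \<Longrightarrow>
      x \<otimes>\<^bsub>D0_group m n A\<^esub> y \<otimes>\<^bsub>D0_group m n A\<^esub> z = x \<otimes>\<^bsub>D0_group m n A\<^esub> (y \<otimes>\<^bsub>D0_group m n A\<^esub> z)"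
    unfolding D0_group_def by (simp add: mult.assoc)
  show "\<And>x y. x \<in> carrier (D0_group m n A) \<Longrightarrow> y \<in> carrier (D0_group m n A) \<Longrightarrow>
      x \<otimes>\<^bsub>D0_group m n A\<^esub> y = y \<otimes>\<^bsub>D0_group m n A\<^esub> x"
    unfolding D0_group_def by (simp add: mult.commute)
  show "\<And>x. x \<in> carrier (D0_group m n A) \<Longrightarrow> \<one>\<^bsub>D0_group m n A\<^esub> \<otimes>\<^bsub>D0_group m n A\<^esub> x = x"
    unfolding D0_group_def by simp
  show "\<And>x. x \<in> carrier (D0_group m n A) \<Longrightarrow> \<exists>y\<in>carrier (D0_group m n A). y \<otimes>\<^bsub>D0_group m n A\<^esub> x = \<one>\<^bsub>D0_group m n A\<^esub>"
  proof -
    fix x assume "x \<in> carrier (D0_group m n A)"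
    then have x: "x \<in> D0 m n A" unfolding D0_group_def by simp
    have "(\<lambda>i. inverse (x i) * x i) = (\<lambda>_. 1)" using D0_nz_all[OF x] by auto
    then show "\<exists>y\<in>carrier (D0_group m n A). y \<otimes>\<^bsub>D0_group m n A\<^esub> x = \<one>\<^bsub>D0_group m n A\<^esub>"
      unfolding D0_group_def using D0_inv[OF x] by (intro bexI[of _ "\<lambda>i. inverse (x i)"]) auto
  qed
qed

lemma Psi_mult: "P \<in> PV m n A lamc \<Longrightarrow> Q \<in> PV m n A lamc \<Longrightarrow> Psi (qhprod n wv P Q) = (\<lambda>i. Psi P i * Psi Q i)"
  unfolding qh_eq using PV_elem D0_mult Psi_Phi by blast

lemma qh_in: "P \<in> PV m n A lamc \<Longrightarrow> Q \<in> PV m n A lamc \<Longrightarrow> qhprod n wv P Q \<in> PV m n A lamc"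
  unfolding qh_eq using PV_elem D0_mult Phi_in by blast

lemma qh_assoc:
  assumes x: "x \<in> PV m n A lamc" and y: "y \<in> PV m n A lamc" and z: "z \<in> PV m n A lamc"
  shows "qhprod n wv (qhprod n wv x y) z = qhprod n wv x (qhprod n wv y z)"
proof -
  have "qhprod n wv (qhprod n wv x y) z = Phi (\<lambda>i. Psi (qhprod n wv x y) i * Psi z i)" by (rule qh_eq)
  also have "\<dots> = Phi (\<lambda>i. Psi x i * Psi y i * Psi z i)" using Psi_mult[OF x y] by simp
  also have "\<dots> = Phi (\<lambda>i. Psi x i * Psi (qhprod n wv y z) i)" using Psi_mult[OF y z] by (simp add: mult.assoc)
  also have "\<dots> = qhprod n wv x (qhprod n wv y z)" by (rule qh_eq[symmetric])
  finally show ?thesis .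
qed

lemma qh_comm: "qhprod n wv x y = qhprod n wv y x"
  unfolding qh_eq by (simp add: mult.commute)

lemma qh_one:
  assumes x: "x \<in> PV m n A lamc"
  shows "qhprod n wv (Phi (\<lambda>_. 1)) x = x"
proof -
  have "qhprod n wv (Phi (\<lambda>_. 1)) x = Phi (\<lambda>i. Psi (Phi (\<lambda>_. 1)) i * Psi x i)" by (rule qh_eq)
  also have "\<dots> = Phi (Psi x)" using Psi_Phi[OF D0_one] by simp
  also have "\<dots> = x" using PV_elem[OF x] by simp
  finally show ?thesis .
qed

lemma qh_inv:
  assumes x: "x \<in> PV m n A lamc"
  shows "\<exists>y\<in>PV m n A lamc. qhprod n wv y x = Phi (\<lambda>_. 1)"
proof -
  have px: "Psi x \<in> D0 m n A" using PV_elem[OF x] by simp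
  define y where "y = Phi (\<lambda>i. inverse (Psi x i))"
  have yin: "y \<in> PV m n A lamc" unfolding y_def using Phi_in[OF D0_inv[OF px]] .
  have "qhprod n wv y x = Phi (\<lambda>i. Psi y i * Psi x i)" by (rule qh_eq)
  also have "(\<lambda>i. Psi y i * Psi x i) = (\<lambda>_. 1)"
    unfolding y_def Psi_Phi[OF D0_inv[OF px]] using D0_nz_all[OF px] by auto
  finally have "qhprod n wv y x = Phi (\<lambda>_. 1)" .
  then show ?thesis using yin by blast
qed

lemma comm_PV: "comm_group (PV_group m n A B)"
proof (rule comm_groupI)
  show "\<And>x y. x \<in> carrier (PV_group m n A B) \<Longrightarrow> y \<in> carrier (PV_group m n A B) \<Longrightarrow>
      x \<otimes>\<^bsub>PV_group m n A B\<^esub> y \<in> carrier (PV_group m n A B)"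
    unfolding PVg using qh_in by simp
  show "\<one>\<^bsub>PV_group m n A B\<^esub> \<in> carrier (PV_group m n A B)" unfolding PVg using Phi_in[OF D0_one] by simp
  show "\<And>x y z. x \<in> carrier (PV_group m n A B) \<Longrightarrow> y \<in> carrier (PV_group m n A B) \<Longrightarrow> z \<in> carrier (PV_group m n A B) \<Longrightarrow>
      x \<otimes>\<^bsub>PV_group m n A B\<^esub> y \<otimes>\<^bsub>PV_group m n A B\<^esub> z = x \<otimes>\<^bsub>PV_group m n A B\<^esub> (y \<otimes>\<^bsub>PV_group m n A B\<^esub> z)"
    unfolding PVg using qh_assoc by simp
  show "\<And>x y. x \<in> carrier (PV_group m n A B) \<Longrightarrow> y \<in> carrier (PV_group m n A B) \<Longrightarrow>
      x \<otimes>\<^bsub>PV_group m n A B\<^esub> y = y \<otimes>\<^bsub>PV_group m n A B\<^esub> x"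
    unfolding PVg using qh_comm by simp
  show "\<And>x. x \<in> carrier (PV_group m n A B) \<Longrightarrow> \<one>\<^bsub>PV_group m n A B\<^esub> \<otimes>\<^bsub>PV_group m n A B\<^esub> x = x"
    unfolding PVg using qh_one by simp
  show "\<And>x. x \<in> carrier (PV_group m n A B) \<Longrightarrow> \<exists>y\<in>carrier (PV_group m n A B). y \<otimes>\<^bsub>PV_group m n A B\<^esub> x = \<one>\<^bsub>PV_group m n A B\<^esub>"
    unfolding PVg using qh_inv by simp
qed

lemma iso_PV: "PV_group m n A B \<cong> D0_group m n A"
proof -
  have "Psi \<in> hom (PV_group m n A B) (D0_group m n A)"
    unfolding hom_def PVg D0_group_def using PV_elem Psi_mult by (auto simp: Pi_def)
  moreover have "bij_betw Psi (carrier (PV_group m n A B)) (carrier (D0_group m n A))"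
    unfolding PVg D0_group_def using bij_Psi by simp
  ultimately have "Psi \<in> iso (PV_group m n A B) (D0_group m n A)" unfolding iso_def by blast
  then show ?thesis unfolding is_iso_def by blast
qed

lemma main:
  "finite (PV m n A (complex_of_real (lambda_min m n A))) \<and>
         comm_group (PV_group m n A B) \<and> PV_group m n A B \<cong> D0_group m n A \<and>
         stabilizing_index m n A = card (PV m n A (complex_of_real (lambda_min m n A)))"
proof (intro conjI)
  show "finite (PV m n A (complex_of_real (lambda_min m n A)))"
    unfolding PV_eq using bij_betw_finite[OF bij_Psi] D0_finite by simp
  show "comm_group (PV_group m n A B)" by (rule comm_PV)
  show "PV_group m n A B \<cong> D0_group m n A" by (rule iso_PV)
  show "stabilizing_index m n A = card (PV m n A (complex_of_real (lambda_min m n A)))"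
    unfolding PV_eq stabilizing_index_def using bij_betw_same_card[OF bij_Psi] by simp
qed

end


theorem lemma3p2:
  fixes m n :: nat and A B :: "nat list \<Rightarrow> real" and s :: real
  assumes "m \<ge> 2" and "n \<ge> 1"
    and "s > 0"
    and "\<forall>is\<in>idx_lists m n. B is \<ge> 0"
    and "\<forall>is\<in>idx_lists m n. A is = s * ident_tensor is - B is"
    and "weakly_irreducible m n A"
  shows "finite (PV m n A (complex_of_real (lambda_min m n A))) \<and>
         comm_group (PV_group m n A B) \<and> PV_group m n A B \<cong> D0_group m n A \<and>
         stabilizing_index m n A = card (PV m n A (complex_of_real (lambda_min m n A)))"
proof -
  interpret ztensor m n A B s by (rule ztensor.intro) (rule assms)+
  show ?thesis by (rule main)
qed

end
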